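(* Let $R$ be a discrete valuation ring with uniformizer $\pi$ and let $\Gamma$ be an abstract group. Assume that every $V\in\mathrm{Rep}_R(\Gamma)$ with $\pi V=0$ admits a weak lift. Then every $E\in\mathrm{Rep}_R(\Gamma)$ admits a weak lift; that is, $\Gamma$ is Tannakian over $R$.
   Context: $\mathrm{Rep}_R(\Gamma)$ is the category of left $R\Gamma$-modules which are finitely generated as $R$-modules; $\mathrm{Rep}^\circ_R(\Gamma)$ is the full subcategory of those which are projective (equivalently free) $R$-modules. A weak lift of $V\in\mathrm{Rep}_R(\Gamma)$ is an object $\widetilde V\in\mathrm{Rep}^\circ_R(\Gamma)$ together with a surjective morphism $\widetilde V\to V$ of $R\Gamma$-modules. $\Gamma$ is called Tannakian over $R$ if every object of $\mathrm{Rep}_R(\Gamma)$ admits a weak lift. *)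

theory Defs
  imports "HOL-Algebra.Algebra"
begin

definition dvr_uniformizer :: "'r ring \<Rightarrow> 'r \<Rightarrow> bool" where
  "dvr_uniformizer R p \<longleftrightarrow>
     principal_domain R \<and> p \<in> carrier R \<and> p \<noteq> \<zero>\<^bsub>R\<^esub> \<and>
     maximalideal (PIdl\<^bsub>R\<^esub> p) R \<and>
     (\<forall>I. maximalideal I R \<longrightarrow> I = PIdl\<^bsub>R\<^esub> p)"

definition is_rep :: "'g monoid \<Rightarrow> 'r ring \<Rightarrow> ('r, 'm) module \<Rightarrow> ('g \<Rightarrow> 'm \<Rightarrow> 'm) \<Rightarrow> bool" where
  "is_rep G R M rho \<longleftrightarrow> group G \<and> module R M \<and>
     (\<forall>g\<in>carrier G. \<forall>x\<in>carrier M. rho g x \<in> carrier M) \<and>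
     (\<forall>g\<in>carrier G. \<forall>x\<in>carrier M. \<forall>y\<in>carrier M.
         rho g (x \<oplus>\<^bsub>M\<^esub> y) = rho g x \<oplus>\<^bsub>M\<^esub> rho g y) \<and>
     (\<forall>g\<in>carrier G. \<forall>a\<in>carrier R. \<forall>x\<in>carrier M.
         rho g (a \<odot>\<^bsub>M\<^esub> x) = a \<odot>\<^bsub>M\<^esub> rho g x) \<and>
     (\<forall>x\<in>carrier M. rho \<one>\<^bsub>G\<^esub> x = x) \<and>
     (\<forall>g\<in>carrier G. \<forall>h\<in>carrier G. \<forall>x\<in>carrier M.
         rho (g \<otimes>\<^bsub>G\<^esub> h) x = rho g (rho h x))"

definition fin_gen :: "'r ring \<Rightarrow> ('r, 'm) module \<Rightarrow> bool" where
  "fin_gen R M \<longleftrightarrow> (\<exists>S. finite S \<and> S \<subseteq> carrier M \<and>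
     (\<forall>x\<in>carrier M. \<exists>c. c \<in> S \<rightarrow> carrier R \<and>
         x = (\<Oplus>\<^bsub>M\<^esub>s\<in>S. c s \<odot>\<^bsub>M\<^esub> s)))"

definition fin_free :: "'r ring \<Rightarrow> ('r, 'm) module \<Rightarrow> bool" where
  "fin_free R M \<longleftrightarrow> (\<exists>B. finite B \<and> B \<subseteq> carrier M \<and>
     (\<forall>x\<in>carrier M. \<exists>!c. c \<in> B \<rightarrow>\<^sub>E carrier R \<and>
         x = (\<Oplus>\<^bsub>M\<^esub>b\<in>B. c b \<odot>\<^bsub>M\<^esub> b)))"

definition in_Rep :: "'g monoid \<Rightarrow> 'r ring \<Rightarrow> ('r, 'm) module \<Rightarrow> ('g \<Rightarrow> 'm \<Rightarrow> 'm) \<Rightarrow> bool" where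
  "in_Rep G R M rho \<longleftrightarrow> is_rep G R M rho \<and> fin_gen R M"

definition in_Rep_free :: "'g monoid \<Rightarrow> 'r ring \<Rightarrow> ('r, 'm) module \<Rightarrow> ('g \<Rightarrow> 'm \<Rightarrow> 'm) \<Rightarrow> bool" where
  "in_Rep_free G R M rho \<longleftrightarrow> is_rep G R M rho \<and> fin_gen R M \<and> fin_free R M"

definition rep_hom :: "'g monoid \<Rightarrow> 'r ring \<Rightarrow> ('r, 'm) module \<Rightarrow> ('g \<Rightarrow> 'm \<Rightarrow> 'm)
     \<Rightarrow> ('r, 'n) module \<Rightarrow> ('g \<Rightarrow> 'n \<Rightarrow> 'n) \<Rightarrow> ('m \<Rightarrow> 'n) \<Rightarrow> bool" where
  "rep_hom G R M rho N sigma f \<longleftrightarrow>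
     f \<in> carrier M \<rightarrow> carrier N \<and>
     (\<forall>x\<in>carrier M. \<forall>y\<in>carrier M. f (x \<oplus>\<^bsub>M\<^esub> y) = f x \<oplus>\<^bsub>N\<^esub> f y) \<and>
     (\<forall>a\<in>carrier R. \<forall>x\<in>carrier M. f (a \<odot>\<^bsub>M\<^esub> x) = a \<odot>\<^bsub>N\<^esub> f x) \<and>
     (\<forall>g\<in>carrier G. \<forall>x\<in>carrier M. f (rho g x) = sigma g (f x))"

definition is_weak_lift :: "'g monoid \<Rightarrow> 'r ring \<Rightarrow> ('r, 'm) module \<Rightarrow> ('g \<Rightarrow> 'm \<Rightarrow> 'm)
     \<Rightarrow> ('r, 'n) module \<Rightarrow> ('g \<Rightarrow> 'n \<Rightarrow> 'n) \<Rightarrow> ('n \<Rightarrow> 'm) \<Rightarrow> bool" where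
  "is_weak_lift G R V rho L lam f \<longleftrightarrow>
     in_Rep_free G R L lam \<and> rep_hom G R L lam V rho f \<and> f ` carrier L = carrier V"

text \<open>A free R-module of finite rank n is isomorphic to
  one whose carrier consists of functions nat => R (supported on {0..<n}), so
  fixing this carrier type for the lift loses no generality.\<close>
definition has_weak_lift :: "'g monoid \<Rightarrow> 'r ring \<Rightarrow> ('r, 'm) module \<Rightarrow> ('g \<Rightarrow> 'm \<Rightarrow> 'm) \<Rightarrow> bool" where
  "has_weak_lift G R V rho \<longleftrightarrow>
     (\<exists>(L :: ('r, nat \<Rightarrow> 'r) module) lam f. is_weak_lift G R V rho L lam f)"

end

theory Submission
  imports Defs
begin

locale dvr = principal_domain R for R (structure) +
  fixes p
  assumes p_carr: "p \<in> carrier R" and p_nz: "p \<noteq> \<zero>"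
    and p_max: "maximalideal (PIdl p) R"
    and p_uniq: "\<And>I. maximalideal I R \<Longrightarrow> I = PIdl p"
begin

lemma p_nonunit: "p \<notin> Units R"
  using p_max ideal_eq_carrier_iff[OF p_carr]
  unfolding maximalideal_def maximalideal_axioms_def by auto

lemma pow_carr[simp]: "p [^] (n::nat) \<in> carrier R"
  using p_carr by simp

lemma pow_nz: "p [^] (n::nat) \<noteq> \<zero>"
proof (induction n)
  case 0 then show ?case by simp
next
  case (Suc n) then show ?case
    using p_nz p_carr integral[of "p [^] n" p] by (auto simp: nat_pow_Suc)
qed

lemma nonunit_mult_p:
  assumes a: "a \<in> carrier R" "a \<notin> Units R"
  shows "\<exists>y\<in>carrier R. a = y \<otimes> p"
proof (cases "a = \<zero>")
  case True then show ?thesis using p_carr by (intro bexI[of _ \<zero>]) auto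
next
  case False
  obtain b where b: "b \<in> carrier R" "ring_irreducible b" "b divides a"
    using exists_irreducible_divisor[of a] a False by blast
  have "maximalideal (PIdl b) R" using irreducible_imp_maximalideal b by blast
  hence eq: "PIdl b = PIdl p" using p_uniq by blast
  from b(3) obtain r where r: "r \<in> carrier R" "a = b \<otimes> r" unfolding factor_def by blast
  hence "a \<in> PIdl b" unfolding cgenideal_def using b(1) m_comm by blast
  hence "a \<in> PIdl p" using eq by simp
  thus ?thesis unfolding cgenideal_def by blast
qed

lemma no_inf_div:
  assumes a: "a \<in> carrier R" "a \<noteq> \<zero>"
  shows "\<exists>n::nat. \<not> (\<exists>c\<in>carrier R. a = c \<otimes> p [^] n)"
proof (rule ccontr)
  assume "\<not> ?thesis"
  hence all: "\<And>n::nat. \<exists>c\<in>carrier R. a = c \<otimes> p [^] n" by blast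
  define C where "C = {PIdl c | c. c \<in> carrier R \<and> (\<exists>n::nat. a = c \<otimes> p [^] n)}"
  have cne: "C \<noteq> {}" unfolding C_def using all[of 0] by blast
  have key: "PIdl c1 \<subseteq> PIdl c2"
    if H: "c1 \<in> carrier R" "c2 \<in> carrier R" "a = c1 \<otimes> p [^] n1" "a = c2 \<otimes> p [^] n2" "n1 \<le> n2"
    for c1 c2 and n1 n2 :: nat
  proof -
    obtain d where d: "n2 = n1 + d" using H(5) le_Suc_ex by blast
    have e0: "p [^] n2 = p [^] (d + n1)" by (simp add: d add.commute)
    have "p [^] n2 = p [^] d \<otimes> p [^] n1" unfolding e0 using p_carr by (simp add: nat_pow_mult)
    hence "c1 \<otimes> p [^] n1 = (c2 \<otimes> p [^] d) \<otimes> p [^] n1"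
      using H(2,3,4) p_carr by (simp add: m_assoc)
    hence "c1 = c2 \<otimes> p [^] d"
      using H(1,2) pow_nz[of n1] m_rcancel[of "p [^] n1" c1 "c2 \<otimes> p [^] d"] p_carr by simp
    hence "c1 = p [^] d \<otimes> c2" using H(2) m_comm[of c2 "p [^] d"] p_carr by simp
    hence "c1 \<in> PIdl c2" unfolding cgenideal_def using H(2) p_carr by blast
    thus ?thesis using H(1,2) cgenideal_minimal[of "PIdl c2" c1] cgenideal_ideal[of c2] by blast
  qed
  have chain: "subset.chain {I. ideal I R} C"
    unfolding pred_on.chain_def
  proof (intro conjI ballI)
    show "C \<subseteq> {I. ideal I R}" unfolding C_def using cgenideal_ideal by blast
  next
    fix x y assume "x \<in> C" "y \<in> C"
    then obtain c1 c2 n1 n2 where "x = PIdl c1" "y = PIdl c2" "c1 \<in> carrier R" "c2 \<in> carrier R"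
      "a = c1 \<otimes> p [^] (n1::nat)" "a = c2 \<otimes> p [^] (n2::nat)" unfolding C_def by blast
    hence "x \<subseteq> y \<or> y \<subseteq> x"
      using key[of c1 c2 n1 n2] key[of c2 c1 n2 n1] by (cases "n1 \<le> n2") auto
    thus "(\<subset>)\<^sup>=\<^sup>= x y \<or> (\<subset>)\<^sup>=\<^sup>= y x" by auto
  qed
  have "\<Union>C \<in> C" using ideal_chain_is_trivial[OF cne chain] .
  then obtain cs m where cs: "\<Union>C = PIdl cs" "cs \<in> carrier R" "a = cs \<otimes> p [^] (m::nat)"
    unfolding C_def by blast
  obtain c' where c': "c' \<in> carrier R" "a = c' \<otimes> p [^] Suc m" using all by blast
  have "PIdl c' \<in> C" unfolding C_def using c' by blast
  hence "c' \<in> PIdl cs" using cs(1) cgenideal_self[OF c'(1)] by blast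
  then obtain z where z: "z \<in> carrier R" "c' = z \<otimes> cs" unfolding cgenideal_def by blast
  have "\<one> \<otimes> (cs \<otimes> p [^] m) = (z \<otimes> p) \<otimes> (cs \<otimes> p [^] m)"
  proof -
    have e1: "(z \<otimes> p) \<otimes> (cs \<otimes> p [^] m) = (z \<otimes> cs) \<otimes> (p [^] m \<otimes> p)"
      using z cs p_carr by (simp add: m_assoc m_lcomm[of p cs] m_comm[of p "p [^] m"])
    show ?thesis using e1 cs c' z by (simp add: nat_pow_Suc)
  qed
  moreover have "cs \<otimes> p [^] m \<noteq> \<zero>" using cs a by simp
  ultimately have "\<one> = z \<otimes> p"
    using m_rcancel[of "cs \<otimes> p [^] m" "\<one>" "z \<otimes> p"] cs z p_carr by simp
  moreover have "p \<otimes> z = z \<otimes> p" using z p_carr m_comm by simp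
  ultimately have "p \<in> Units R" using z p_carr unfolding Units_def by auto
  thus False using p_nonunit by simp
qed

lemma val_decomp:
  assumes a: "a \<in> carrier R" "a \<noteq> \<zero>"
  shows "\<exists>u (j::nat). u \<in> Units R \<and> a = u \<otimes> p [^] j"
proof -
  define P where "P n \<longleftrightarrow> (\<exists>c\<in>carrier R. a = c \<otimes> p [^] (n::nat))" for n
  have ex: "\<exists>n. \<not> P n" using no_inf_div[OF a] unfolding P_def by blast
  define n0 where "n0 = (LEAST n. \<not> P n)"
  have n0: "\<not> P n0" unfolding n0_def using ex LeastI_ex by metis
  have "P 0" unfolding P_def using a by (intro bexI[of _ a]) auto
  hence "n0 \<noteq> 0" using n0 by (cases n0) auto
  then obtain k where k: "n0 = Suc k" using not0_implies_Suc by blast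
  have "P k" using not_less_Least[of k "\<lambda>n. \<not> P n"] k unfolding n0_def by auto
  then obtain c where c: "c \<in> carrier R" "a = c \<otimes> p [^] k" unfolding P_def by blast
  show ?thesis
  proof (cases "c \<in> Units R")
    case True then show ?thesis using c by blast
  next
    case False
    then obtain y where y: "y \<in> carrier R" "c = y \<otimes> p" using nonunit_mult_p c by blast
    have "p [^] n0 = p \<otimes> p [^] k" using k p_carr nat_pow_Suc2[of p k] by metis
    hence "a = y \<otimes> p [^] n0" using c y k p_carr by (simp add: m_assoc)
    hence "P n0" unfolding P_def using y by blast
    thus ?thesis using n0 by simp
  qed
qed

end

lemma dvr_from_def: "dvr_uniformizer R p \<Longrightarrow> dvr R p"
  unfolding dvr_uniformizer_def dvr_def dvr_axioms_def by blast

definition lcs where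
  "lcs R M S = {x. \<exists>c. c \<in> S \<rightarrow> carrier R \<and> x = (\<Oplus>\<^bsub>M\<^esub>s\<in>S. c s \<odot>\<^bsub>M\<^esub> s)}"

lemma finsum_hom:
  assumes M: "abelian_group M" and N: "abelian_group N" and h: "h \<in> carrier M \<rightarrow> carrier N"
    and hadd: "\<And>x y. x \<in> carrier M \<Longrightarrow> y \<in> carrier M \<Longrightarrow> h (x \<oplus>\<^bsub>M\<^esub> y) = h x \<oplus>\<^bsub>N\<^esub> h y"
    and A: "finite A" and f: "f \<in> A \<rightarrow> carrier M"
  shows "h (finsum M f A) = finsum N (\<lambda>a. h (f a)) A"
proof -
  interpret M: abelian_group M by fact
  interpret N: abelian_group N by fact
  have z: "\<zero>\<^bsub>M\<^esub> \<in> carrier M" by simp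
  have "h \<zero>\<^bsub>M\<^esub> \<oplus>\<^bsub>N\<^esub> h \<zero>\<^bsub>M\<^esub> = \<zero>\<^bsub>N\<^esub> \<oplus>\<^bsub>N\<^esub> h \<zero>\<^bsub>M\<^esub>"
    using hadd[OF z z] z h by (auto simp: Pi_def)
  hence h0: "h \<zero>\<^bsub>M\<^esub> = \<zero>\<^bsub>N\<^esub>"
    using N.add.right_cancel[of "h \<zero>\<^bsub>M\<^esub>" "h \<zero>\<^bsub>M\<^esub>" "\<zero>\<^bsub>N\<^esub>"] z h by auto
  show ?thesis using A f
  proof (induction A rule: finite_induct)
    case empty
    then show ?case using h0 by simp
  next
    case (insert a A)
    have fa: "f a \<in> carrier M" "f \<in> A \<rightarrow> carrier M" using insert by auto
    have "finsum M f (insert a A) = f a \<oplus>\<^bsub>M\<^esub> finsum M f A"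
      using M.finsum_insert[OF insert(1,2) fa(2) fa(1)] .
    moreover have "finsum N (\<lambda>a. h (f a)) (insert a A) = h (f a) \<oplus>\<^bsub>N\<^esub> finsum N (\<lambda>a. h (f a)) A"
      using N.finsum_insert[OF insert(1,2), of "\<lambda>a. h (f a)"] fa h by (auto simp: Pi_def)
    moreover have "finsum M f A \<in> carrier M" using M.finsum_closed[OF fa(2)] .
    ultimately show ?case using insert hadd fa by simp
  qed
qed

context module begin

lemma fs_cong:
  assumes "\<And>i. i \<in> A \<Longrightarrow> f i = g i" "g \<in> A \<rightarrow> carrier M"
  shows "finsum M f A = finsum M g A"
  using M.finsum_cong'[of A A g f] assms by auto

lemma lcs_carr: "finite S \<Longrightarrow> S \<subseteq> carrier M \<Longrightarrow> lcs R M S \<subseteq> carrier M"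
  unfolding lcs_def by (auto intro!: M.finsum_closed)

lemma lcs_zero: assumes "finite S" "S \<subseteq> carrier M" shows "\<zero>\<^bsub>M\<^esub> \<in> lcs R M S"
proof -
  have "(\<Oplus>\<^bsub>M\<^esub>s\<in>S. \<zero> \<odot>\<^bsub>M\<^esub> s) = (\<Oplus>\<^bsub>M\<^esub>s\<in>S. \<zero>\<^bsub>M\<^esub>)"
    using assms by (intro fs_cong) auto
  also have "\<dots> = \<zero>\<^bsub>M\<^esub>" by simp
  finally show ?thesis unfolding lcs_def
    by (intro CollectI exI[of _ "\<lambda>_. \<zero>"]) auto
qed

lemma lcs_add: assumes S: "finite S" "S \<subseteq> carrier M" and xy: "x \<in> lcs R M S" "y \<in> lcs R M S"
  shows "x \<oplus>\<^bsub>M\<^esub> y \<in> lcs R M S"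
proof -
  obtain c d where c: "c \<in> S \<rightarrow> carrier R" "x = (\<Oplus>\<^bsub>M\<^esub>s\<in>S. c s \<odot>\<^bsub>M\<^esub> s)"
    and d: "d \<in> S \<rightarrow> carrier R" "y = (\<Oplus>\<^bsub>M\<^esub>s\<in>S. d s \<odot>\<^bsub>M\<^esub> s)"
    using xy unfolding lcs_def by blast
  have "(\<Oplus>\<^bsub>M\<^esub>s\<in>S. (c s \<oplus> d s) \<odot>\<^bsub>M\<^esub> s) = (\<Oplus>\<^bsub>M\<^esub>s\<in>S. c s \<odot>\<^bsub>M\<^esub> s \<oplus>\<^bsub>M\<^esub> d s \<odot>\<^bsub>M\<^esub> s)"
    using S c d by (intro fs_cong) (auto simp: smult_l_distr Pi_iff subsetD)
  also have "\<dots> = x \<oplus>\<^bsub>M\<^esub> y" using S c d by (subst M.finsum_addf) auto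
  finally show ?thesis unfolding lcs_def using c d
    by (intro CollectI exI[of _ "\<lambda>s. c s \<oplus> d s"]) auto
qed

lemma lcs_smult: assumes S: "finite S" "S \<subseteq> carrier M" and x: "x \<in> lcs R M S" and a: "a \<in> carrier R"
  shows "a \<odot>\<^bsub>M\<^esub> x \<in> lcs R M S"
proof -
  obtain c where c: "c \<in> S \<rightarrow> carrier R" "x = (\<Oplus>\<^bsub>M\<^esub>s\<in>S. c s \<odot>\<^bsub>M\<^esub> s)"
    using x unfolding lcs_def by blast
  have "a \<odot>\<^bsub>M\<^esub> x = (\<Oplus>\<^bsub>M\<^esub>s\<in>S. a \<odot>\<^bsub>M\<^esub> (c s \<odot>\<^bsub>M\<^esub> s))"
    unfolding c(2) using S c a by (intro finsum_smult_ldistr) auto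
  also have "\<dots> = (\<Oplus>\<^bsub>M\<^esub>s\<in>S. (a \<otimes> c s) \<odot>\<^bsub>M\<^esub> s)"
    using S c a by (intro fs_cong) (auto simp: smult_assoc1 Pi_iff subsetD)
  finally show ?thesis unfolding lcs_def using c a
    by (intro CollectI exI[of _ "\<lambda>s. a \<otimes> c s"]) auto
qed

lemma lcs_gen: assumes S: "finite S" "S \<subseteq> carrier M" and s: "s \<in> S"
  shows "s \<in> lcs R M S"
proof -
  have "(\<Oplus>\<^bsub>M\<^esub>t\<in>S. (if t = s then \<one> else \<zero>) \<odot>\<^bsub>M\<^esub> t) = (\<Oplus>\<^bsub>M\<^esub>t\<in>S. if s = t then t else \<zero>\<^bsub>M\<^esub>)"
    using S by (intro fs_cong) auto
  also have "\<dots> = s" using M.finsum_singleton[OF s S(1), of "\<lambda>t. t"] S by auto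
  finally show ?thesis unfolding lcs_def
    by (intro CollectI exI[of _ "\<lambda>t. if t = s then \<one> else \<zero>"]) auto
qed

lemma lcs_neg: assumes S: "finite S" "S \<subseteq> carrier M" and x: "x \<in> lcs R M S"
  shows "\<ominus>\<^bsub>M\<^esub> x \<in> lcs R M S"
proof -
  have "x \<in> carrier M" using lcs_carr[OF S] x by blast
  hence "\<ominus>\<^bsub>M\<^esub> x = (\<ominus> \<one>) \<odot>\<^bsub>M\<^esub> x" using smult_l_minus[of \<one> x] by simp
  thus ?thesis using lcs_smult[OF S x, of "\<ominus> \<one>"] by simp
qed

lemma lcs_finsum: assumes S: "finite S" "S \<subseteq> carrier M" and A: "finite A" and f: "f \<in> A \<rightarrow> lcs R M S"
  shows "finsum M f A \<in> lcs R M S"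
  using A f
proof (induction A rule: finite_induct)
  case empty then show ?case using lcs_zero[OF S] by simp
next
  case (insert a A)
  have fA: "f \<in> A \<rightarrow> carrier M" "f a \<in> carrier M" using insert lcs_carr[OF S] by auto
  have "finsum M f (insert a A) = f a \<oplus>\<^bsub>M\<^esub> finsum M f A"
    using M.finsum_insert[OF insert(1,2) fA] .
  then show ?case using lcs_add[OF S] insert by auto
qed

lemma lcs_min:
  assumes S: "finite S" "S \<subseteq> T" and T: "T \<subseteq> carrier M" "\<zero>\<^bsub>M\<^esub> \<in> T"
    and Tadd: "\<And>x y. x \<in> T \<Longrightarrow> y \<in> T \<Longrightarrow> x \<oplus>\<^bsub>M\<^esub> y \<in> T"
    and Tsm: "\<And>a x. a \<in> carrier R \<Longrightarrow> x \<in> T \<Longrightarrow> a \<odot>\<^bsub>M\<^esub> x \<in> T"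
  shows "lcs R M S \<subseteq> T"
proof
  fix x assume "x \<in> lcs R M S"
  then obtain c where c: "c \<in> S \<rightarrow> carrier R" "x = (\<Oplus>\<^bsub>M\<^esub>s\<in>S. c s \<odot>\<^bsub>M\<^esub> s)"
    unfolding lcs_def by blast
  have "\<And>A. finite A \<Longrightarrow> A \<subseteq> S \<Longrightarrow> (\<Oplus>\<^bsub>M\<^esub>s\<in>A. c s \<odot>\<^bsub>M\<^esub> s) \<in> T"
  proof -
    fix A assume "finite A" "A \<subseteq> S"
    thus "(\<Oplus>\<^bsub>M\<^esub>s\<in>A. c s \<odot>\<^bsub>M\<^esub> s) \<in> T"
    proof (induction A rule: finite_induct)
      case empty then show ?case using T by simp
    next
      case (insert a A)
      have "(\<Oplus>\<^bsub>M\<^esub>s\<in>insert a A. c s \<odot>\<^bsub>M\<^esub> s) = c a \<odot>\<^bsub>M\<^esub> a \<oplus>\<^bsub>M\<^esub> (\<Oplus>\<^bsub>M\<^esub>s\<in>A. c s \<odot>\<^bsub>M\<^esub> s)"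
        using insert c S T by (intro M.finsum_insert) (auto simp: Pi_iff subsetD)
      moreover have "c a \<odot>\<^bsub>M\<^esub> a \<in> T" using Tsm c insert S by (auto simp: Pi_iff)
      ultimately show ?case using insert Tadd by auto
    qed
  qed
  thus "x \<in> T" using c S by auto
qed

end

definition prep :: "('r,'m) module \<Rightarrow> ('m \<Rightarrow> 'n) \<Rightarrow> 'n \<Rightarrow> 'm" where
  "prep M q u = (SOME x. x \<in> carrier M \<and> q x = u)"

definition push :: "('r,'m) module \<Rightarrow> ('m \<Rightarrow> 'n) \<Rightarrow> ('r,'n) module" where
  "push M q = \<lparr>carrier = q ` carrier M, monoid.mult = (\<lambda>u v. u), one = q \<zero>\<^bsub>M\<^esub>, ring.zero = q \<zero>\<^bsub>M\<^esub>,
     ring.add = (\<lambda>u v. q (prep M q u \<oplus>\<^bsub>M\<^esub> prep M q v)), smult = (\<lambda>a u. q (a \<odot>\<^bsub>M\<^esub> prep M q u))\<rparr>"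

definition pushrho :: "('r,'m) module \<Rightarrow> ('m \<Rightarrow> 'n) \<Rightarrow> ('g \<Rightarrow> 'm \<Rightarrow> 'm) \<Rightarrow> 'g \<Rightarrow> 'n \<Rightarrow> 'n" where
  "pushrho M q rho = (\<lambda>g u. q (rho g (prep M q u)))"

lemma push_simps[simp]:
  "carrier (push M q) = q ` carrier M"
  "ring.zero (push M q) = q \<zero>\<^bsub>M\<^esub>"
  unfolding push_def by simp_all

lemma push_ops:
  "ring.add (push M q) u v = q (prep M q u \<oplus>\<^bsub>M\<^esub> prep M q v)"
  "smult (push M q) a u = q (a \<odot>\<^bsub>M\<^esub> prep M q u)"
  unfolding push_def by simp_all

lemma (in abelian_group) diff_add4:
  assumes "a \<in> carrier G" "b \<in> carrier G" "c \<in> carrier G" "d \<in> carrier G"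
  shows "(a \<oplus> b) \<ominus> (c \<oplus> d) = (a \<ominus> c) \<oplus> (b \<ominus> d)"
  using assms by (simp add: a_minus_def minus_add a_ac)

lemma rep_module: "is_rep G R M rho \<Longrightarrow> module R M" unfolding is_rep_def by blast

lemma rep_rho_neg:
  assumes "is_rep G R M rho" "g \<in> carrier G" "x \<in> carrier M"
  shows "rho g (\<ominus>\<^bsub>M\<^esub> x) = \<ominus>\<^bsub>M\<^esub> rho g x"
proof -
  interpret module R M using rep_module[OF assms(1)] .
  have c: "rho g x \<in> carrier M" using assms unfolding is_rep_def by blast
  have "\<ominus>\<^bsub>M\<^esub> x = (\<ominus>\<^bsub>R\<^esub> \<one>\<^bsub>R\<^esub>) \<odot>\<^bsub>M\<^esub> x" using smult_l_minus[of "\<one>\<^bsub>R\<^esub>" x] assms by simp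
  hence "rho g (\<ominus>\<^bsub>M\<^esub> x) = (\<ominus>\<^bsub>R\<^esub> \<one>\<^bsub>R\<^esub>) \<odot>\<^bsub>M\<^esub> rho g x"
    using assms unfolding is_rep_def by simp
  also have "\<dots> = \<ominus>\<^bsub>M\<^esub> rho g x" using smult_l_minus[of "\<one>\<^bsub>R\<^esub>" "rho g x"] c by simp
  finally show ?thesis .
qed

locale pushctx =
  fixes G :: "'g monoid" and R :: "'r ring" and M :: "('r,'m) module" and rho :: "'g \<Rightarrow> 'm \<Rightarrow> 'm"
    and N :: "'m set" and q :: "'m \<Rightarrow> 'n"
  assumes rep: "is_rep G R M rho"
    and N_sub: "N \<subseteq> carrier M" and N_zero: "\<zero>\<^bsub>M\<^esub> \<in> N"
    and N_add: "\<And>x y. x \<in> N \<Longrightarrow> y \<in> N \<Longrightarrow> x \<oplus>\<^bsub>M\<^esub> y \<in> N"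
    and N_smult: "\<And>a x. a \<in> carrier R \<Longrightarrow> x \<in> N \<Longrightarrow> a \<odot>\<^bsub>M\<^esub> x \<in> N"
    and N_rho: "\<And>g x. g \<in> carrier G \<Longrightarrow> x \<in> N \<Longrightarrow> rho g x \<in> N"
    and q_eq: "\<And>x y. x \<in> carrier M \<Longrightarrow> y \<in> carrier M \<Longrightarrow> q x = q y \<longleftrightarrow> x \<ominus>\<^bsub>M\<^esub> y \<in> N"

sublocale pushctx \<subseteq> module R M using rep_module[OF rep] .

context pushctx begin

lemma rho_closed: "g \<in> carrier G \<Longrightarrow> x \<in> carrier M \<Longrightarrow> rho g x \<in> carrier M"
  using rep unfolding is_rep_def by blast
lemma rho_add: "g \<in> carrier G \<Longrightarrow> x \<in> carrier M \<Longrightarrow> y \<in> carrier M \<Longrightarrow>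
   rho g (x \<oplus>\<^bsub>M\<^esub> y) = rho g x \<oplus>\<^bsub>M\<^esub> rho g y"
  using rep unfolding is_rep_def by blast
lemma rho_smult: "g \<in> carrier G \<Longrightarrow> a \<in> carrier R \<Longrightarrow> x \<in> carrier M \<Longrightarrow>
   rho g (a \<odot>\<^bsub>M\<^esub> x) = a \<odot>\<^bsub>M\<^esub> rho g x"
  using rep unfolding is_rep_def by blast
lemma rho_one: "x \<in> carrier M \<Longrightarrow> rho \<one>\<^bsub>G\<^esub> x = x"
  using rep unfolding is_rep_def by blast
lemma rho_mult: "g \<in> carrier G \<Longrightarrow> h \<in> carrier G \<Longrightarrow> x \<in> carrier M \<Longrightarrow>
   rho (g \<otimes>\<^bsub>G\<^esub> h) x = rho g (rho h x)"
  using rep unfolding is_rep_def by blast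
lemma grp: "group G" using rep unfolding is_rep_def by blast

lemma N_neg: "x \<in> N \<Longrightarrow> \<ominus>\<^bsub>M\<^esub> x \<in> N"
  using N_smult[of "\<ominus>\<^bsub>R\<^esub> \<one>\<^bsub>R\<^esub>" x] smult_l_minus[of "\<one>\<^bsub>R\<^esub>" x] N_sub by auto

lemma prep_q: assumes "x \<in> carrier M"
  shows "prep M q (q x) \<in> carrier M" "q (prep M q (q x)) = q x"
proof -
  have "\<exists>y. y \<in> carrier M \<and> q y = q x" using assms by blast
  hence "prep M q (q x) \<in> carrier M \<and> q (prep M q (q x)) = q x"
    unfolding prep_def by (rule someI_ex)
  thus "prep M q (q x) \<in> carrier M" "q (prep M q (q x)) = q x" by auto
qed

lemma prep_diff: "x \<in> carrier M \<Longrightarrow> prep M q (q x) \<ominus>\<^bsub>M\<^esub> x \<in> N"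
  using prep_q q_eq by blast

lemma hom_add: assumes "x \<in> carrier M" "y \<in> carrier M"
  shows "add (push M q) (q x) (q y) = q (x \<oplus>\<^bsub>M\<^esub> y)"
proof -
  have "(prep M q (q x) \<oplus>\<^bsub>M\<^esub> prep M q (q y)) \<ominus>\<^bsub>M\<^esub> (x \<oplus>\<^bsub>M\<^esub> y)
     = (prep M q (q x) \<ominus>\<^bsub>M\<^esub> x) \<oplus>\<^bsub>M\<^esub> (prep M q (q y) \<ominus>\<^bsub>M\<^esub> y)"
    using assms prep_q by (intro M.diff_add4) auto
  also have "\<dots> \<in> N" using prep_diff assms N_add by auto
  finally show ?thesis using q_eq assms prep_q by (simp add: push_ops)
qed

lemma hom_smult: assumes "a \<in> carrier R" "x \<in> carrier M"
  shows "smult (push M q) a (q x) = q (a \<odot>\<^bsub>M\<^esub> x)"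
proof -
  have "a \<odot>\<^bsub>M\<^esub> prep M q (q x) \<ominus>\<^bsub>M\<^esub> a \<odot>\<^bsub>M\<^esub> x = a \<odot>\<^bsub>M\<^esub> (prep M q (q x) \<ominus>\<^bsub>M\<^esub> x)"
    using assms prep_q by (simp add: a_minus_def smult_r_distr smult_r_minus)
  also have "\<dots> \<in> N" using prep_diff assms N_smult by auto
  finally show ?thesis using q_eq assms prep_q by (simp add: push_ops)
qed

lemma hom_rho: assumes "g \<in> carrier G" "x \<in> carrier M"
  shows "pushrho M q rho g (q x) = q (rho g x)"
proof -
  have "rho g (prep M q (q x)) \<ominus>\<^bsub>M\<^esub> rho g x = rho g (prep M q (q x) \<ominus>\<^bsub>M\<^esub> x)"
    using assms prep_q rho_add rep_rho_neg[OF rep] by (simp add: a_minus_def)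
  also have "\<dots> \<in> N" using prep_diff assms N_rho by auto
  finally show ?thesis using q_eq assms prep_q rho_closed unfolding pushrho_def by simp
qed

lemma q_zero_iff: "x \<in> carrier M \<Longrightarrow> q x = \<zero>\<^bsub>push M q\<^esub> \<longleftrightarrow> x \<in> N"
proof -
  have z: "\<ominus>\<^bsub>M\<^esub> \<zero>\<^bsub>M\<^esub> = \<zero>\<^bsub>M\<^esub>" using M.l_neg[of "\<zero>\<^bsub>M\<^esub>"] M.r_zero[of "\<ominus>\<^bsub>M\<^esub> \<zero>\<^bsub>M\<^esub>"] by simp
  assume "x \<in> carrier M"
  thus ?thesis using q_eq[of x "\<zero>\<^bsub>M\<^esub>"] z by (simp add: a_minus_def)
qed

lemmas homs = hom_add hom_smult hom_rho

lemma push_module: "module R (push M q)"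
proof (rule moduleI)
  show "cring R" by (rule is_cring)
  show "abelian_group (push M q)"
  proof (rule abelian_groupI)
    show "\<zero>\<^bsub>push M q\<^esub> \<in> carrier (push M q)" by simp
  next
    fix u assume "u \<in> carrier (push M q)"
    then obtain x where x: "x \<in> carrier M" "u = q x" by auto
    thus "\<exists>y\<in>carrier (push M q). y \<oplus>\<^bsub>push M q\<^esub> u = \<zero>\<^bsub>push M q\<^esub>"
      using hom_add[of "\<ominus>\<^bsub>M\<^esub> x" x] by (intro bexI[of _ "q (\<ominus>\<^bsub>M\<^esub> x)"]) (auto simp: M.l_neg)
  qed (auto simp: hom_add M.a_ac intro!: imageI)
qed (auto simp: hom_add hom_smult smult_l_distr smult_r_distr smult_assoc1)

end

lemma sub_lcs_iff: "carrier M \<subseteq> lcs R M S \<longleftrightarrow>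
   (\<forall>x\<in>carrier M. \<exists>c. c \<in> S \<rightarrow> carrier R \<and> x = (\<Oplus>\<^bsub>M\<^esub>s\<in>S. c s \<odot>\<^bsub>M\<^esub> s))"
  unfolding lcs_def by (simp add: subset_iff Ball_def)

lemma fin_gen_lcs: "fin_gen R M \<longleftrightarrow> (\<exists>S. finite S \<and> S \<subseteq> carrier M \<and> carrier M \<subseteq> lcs R M S)"
  unfolding fin_gen_def sub_lcs_iff by (rule refl)

lemma rep_hom_comp:
  assumes F: "rep_hom G R A a B b f" and Gh: "rep_hom G R B b C c g"
  shows "rep_hom G R A a C c (\<lambda>x. g (f x))"
proof -
  have f: "f \<in> carrier A \<rightarrow> carrier B" and g: "g \<in> carrier B \<rightarrow> carrier C"
    using assms unfolding rep_hom_def by blast+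
  have fa: "\<And>x y. x \<in> carrier A \<Longrightarrow> y \<in> carrier A \<Longrightarrow> f (x \<oplus>\<^bsub>A\<^esub> y) = f x \<oplus>\<^bsub>B\<^esub> f y"
   and fs: "\<And>r x. r \<in> carrier R \<Longrightarrow> x \<in> carrier A \<Longrightarrow> f (r \<odot>\<^bsub>A\<^esub> x) = r \<odot>\<^bsub>B\<^esub> f x"
   and fr: "\<And>h x. h \<in> carrier G \<Longrightarrow> x \<in> carrier A \<Longrightarrow> f (a h x) = b h (f x)"
    using F unfolding rep_hom_def by blast+
  have ga: "\<And>x y. x \<in> carrier B \<Longrightarrow> y \<in> carrier B \<Longrightarrow> g (x \<oplus>\<^bsub>B\<^esub> y) = g x \<oplus>\<^bsub>C\<^esub> g y"
   and gs: "\<And>r x. r \<in> carrier R \<Longrightarrow> x \<in> carrier B \<Longrightarrow> g (r \<odot>\<^bsub>B\<^esub> x) = r \<odot>\<^bsub>C\<^esub> g x"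
   and gr: "\<And>h x. h \<in> carrier G \<Longrightarrow> x \<in> carrier B \<Longrightarrow> g (b h x) = c h (g x)"
    using Gh unfolding rep_hom_def by blast+
  have fc: "\<And>x. x \<in> carrier A \<Longrightarrow> f x \<in> carrier B" using f by blast
  show ?thesis unfolding rep_hom_def
    using f g fa fs fr ga gs gr fc by auto
qed

lemma lift_comp:
  assumes L: "is_weak_lift G R V rho L lam f" and g: "rep_hom G R V rho W sig g"
    and gs: "g ` carrier V = carrier W"
  shows "is_weak_lift G R W sig L lam (\<lambda>x. g (f x))"
proof -
  have L1: "in_Rep_free G R L lam" "rep_hom G R L lam V rho f" "f ` carrier L = carrier V"
    using L unfolding is_weak_lift_def by blast+
  have "(\<lambda>x. g (f x)) ` carrier L = g ` (f ` carrier L)" by (simp add: image_image)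
  also have "\<dots> = carrier W" using L1(3) gs by simp
  finally have "(\<lambda>x. g (f x)) ` carrier L = carrier W" .
  thus ?thesis unfolding is_weak_lift_def using L1(1) rep_hom_comp[OF L1(2) g] by blast
qed

lemma has_lift_comp:
  fixes R :: "'r ring"
  assumes "has_weak_lift G R V rho" "rep_hom G R V rho W sig g" "g ` carrier V = carrier W"
  shows "has_weak_lift G R W sig"
proof -
  obtain L :: "('r, nat \<Rightarrow> 'r) module" and lam f where "is_weak_lift G R V rho L lam f"
    using assms(1) unfolding has_weak_lift_def by blast
  hence "is_weak_lift G R W sig L lam (\<lambda>x. g (f x))" using lift_comp assms(2,3) by blast
  thus ?thesis unfolding has_weak_lift_def by blast
qed

context pushctx begin

lemma ball_img: "(\<forall>u\<in>f ` A. P u) = (\<forall>x\<in>A. P (f x))" by auto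

lemma push_rep: "is_rep G R (push M q) (pushrho M q rho)"
  unfolding is_rep_def push_simps ball_img
proof (intro conjI ballI)
  show "group G" by (rule grp)
  show "module R (push M q)" by (rule push_module)
  fix g assume g: "g \<in> carrier G"
  { fix x assume x: "x \<in> carrier M"
    show "pushrho M q rho g (q x) \<in> q ` carrier M" using g x by (simp add: hom_rho rho_closed)
    fix y assume y: "y \<in> carrier M"
    show "pushrho M q rho g (q x \<oplus>\<^bsub>push M q\<^esub> q y) =
          pushrho M q rho g (q x) \<oplus>\<^bsub>push M q\<^esub> pushrho M q rho g (q y)"
      using g x y by (simp add: hom_add hom_rho rho_closed rho_add)
  }
  { fix a x assume a: "a \<in> carrier R" and x: "x \<in> carrier M"
    show "pushrho M q rho g (a \<odot>\<^bsub>push M q\<^esub> q x) = a \<odot>\<^bsub>push M q\<^esub> pushrho M q rho g (q x)"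
      using g x a by (simp add: hom_smult hom_rho rho_closed rho_smult)
  }
  { fix h x assume h: "h \<in> carrier G" and x: "x \<in> carrier M"
    show "pushrho M q rho (g \<otimes>\<^bsub>G\<^esub> h) (q x) = pushrho M q rho g (pushrho M q rho h (q x))"
      using g h x grp by (simp add: hom_rho rho_closed rho_mult group.subgroup_self subgroup.m_closed)
  }
next
  fix x assume x: "x \<in> carrier M"
  show "pushrho M q rho \<one>\<^bsub>G\<^esub> (q x) = q x"
    using x grp by (simp add: hom_rho rho_one group.is_monoid monoid.one_closed)
qed

lemma q_hom: "rep_hom G R M rho (push M q) (pushrho M q rho) q"
  unfolding rep_hom_def by (simp add: hom_add hom_rho hom_smult)

lemma push_fin_gen:
  assumes "fin_gen R M" shows "fin_gen R (push M q)"
proof -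
  interpret P: module R "push M q" by (rule push_module)
  obtain S where S: "finite S" "S \<subseteq> carrier M" "carrier M \<subseteq> lcs R M S"
    using fin_gen_lcs[THEN iffD1, OF assms] by blast
  have qS: "finite (q ` S)" "q ` S \<subseteq> carrier (push M q)" using S by auto
  have "carrier (push M q) \<subseteq> lcs R (push M q) (q ` S)"
  proof
    fix u assume "u \<in> carrier (push M q)"
    then obtain x where x: "x \<in> carrier M" "u = q x" by auto
    then obtain c where c: "c \<in> S \<rightarrow> carrier R" "x = (\<Oplus>\<^bsub>M\<^esub>s\<in>S. c s \<odot>\<^bsub>M\<^esub> s)"
      using S unfolding lcs_def by blast
    have sc: "\<And>s. s \<in> S \<Longrightarrow> s \<in> carrier M" "\<And>s. s \<in> S \<Longrightarrow> c s \<in> carrier R"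
      using S c by auto
    have tc: "(\<lambda>s. c s \<odot>\<^bsub>M\<^esub> s) \<in> S \<rightarrow> carrier M" using sc by simp
    have qc: "q \<in> carrier M \<rightarrow> carrier (push M q)" by simp
    have "q x = (\<Oplus>\<^bsub>push M q\<^esub>s\<in>S. q (c s \<odot>\<^bsub>M\<^esub> s))"
      unfolding c(2)
      by (rule finsum_hom[OF M.abelian_group_axioms P.abelian_group_axioms qc hom_add[symmetric] S(1) tc])
    also have "\<dots> = (\<Oplus>\<^bsub>push M q\<^esub>s\<in>S. c s \<odot>\<^bsub>push M q\<^esub> q s)"
      using sc by (intro P.fs_cong) (simp_all add: hom_smult)
    also have "\<dots> \<in> lcs R (push M q) (q ` S)"
    proof (rule P.lcs_finsum[OF qS S(1)])
      show "(\<lambda>s. c s \<odot>\<^bsub>push M q\<^esub> q s) \<in> S \<rightarrow> lcs R (push M q) (q ` S)"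
        using P.lcs_smult[OF qS P.lcs_gen[OF qS]] sc by simp
    qed
    finally show "u \<in> lcs R (push M q) (q ` S)" using x by simp
  qed
  thus ?thesis using qS by (intro fin_gen_lcs[THEN iffD2] exI[of _ "q ` S"] conjI)
qed

lemma push_in_Rep: "in_Rep G R M rho \<Longrightarrow> in_Rep G R (push M q) (pushrho M q rho)"
  unfolding in_Rep_def using push_rep push_fin_gen by blast

end

locale injctx = pushctx G R M rho "{\<zero>\<^bsub>M\<^esub>}" q
  for G :: "'g monoid" and R :: "'r ring" and M :: "('r,'m) module" and rho and q :: "'m \<Rightarrow> 'n"

context injctx begin

lemma q_inj: assumes "x \<in> carrier M" "y \<in> carrier M" "q x = q y" shows "x = y"
proof -
  have "x \<ominus>\<^bsub>M\<^esub> y = \<zero>\<^bsub>M\<^esub>" using q_eq assms by blast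
  hence "x \<ominus>\<^bsub>M\<^esub> y \<oplus>\<^bsub>M\<^esub> y = y" using assms by simp
  thus ?thesis using assms by (simp add: a_minus_def M.a_assoc M.l_neg)
qed

lemma prep_inv: "x \<in> carrier M \<Longrightarrow> prep M q (q x) = x"
  using prep_q q_inj by blast

lemma prep_hom: "rep_hom G R (push M q) (pushrho M q rho) M rho (prep M q)"
  unfolding rep_hom_def
  by (auto simp: hom_add hom_rho hom_smult prep_inv rho_closed prep_q)

lemma prep_surj: "prep M q ` carrier (push M q) = carrier M"
proof
  show "prep M q ` carrier (push M q) \<subseteq> carrier M" using prep_q by auto
  show "carrier M \<subseteq> prep M q ` carrier (push M q)"
  proof
    fix x assume "x \<in> carrier M"
    thus "x \<in> prep M q ` carrier (push M q)" using prep_inv[of x] by (auto intro!: image_eqI[of x _ "q x"])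
  qed
qed

lemma lift_back: "has_weak_lift G R (push M q) (pushrho M q rho) \<Longrightarrow> has_weak_lift G R M rho"
  using has_lift_comp prep_hom prep_surj by blast

end

definition lcomb :: "('r,'m) module \<Rightarrow> nat \<Rightarrow> (nat \<Rightarrow> 'm) \<Rightarrow> (nat \<Rightarrow> 'r) \<Rightarrow> 'm" where
  "lcomb M m s c = (\<Oplus>\<^bsub>M\<^esub> i\<in>{..<m}. c i \<odot>\<^bsub>M\<^esub> s i)"

definition fib :: "'r ring \<Rightarrow> ('r,'m) module \<Rightarrow> nat \<Rightarrow> (nat \<Rightarrow> 'm) \<Rightarrow> 'm set \<Rightarrow> 'm \<Rightarrow> (nat \<Rightarrow> 'r) set" where
  "fib R M m s N x = {c. (\<forall>i. c i \<in> carrier R) \<and> lcomb M m s c \<ominus>\<^bsub>M\<^esub> x \<in> N}"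

lemma fin_gen_enum:
  assumes mod: "module R M" and fg: "fin_gen R M"
  shows "\<exists>m s. s \<in> {..<m} \<rightarrow> carrier M \<and>
     (\<forall>x\<in>carrier M. \<exists>c. (\<forall>i. c i \<in> carrier R) \<and> x = lcomb M m s c)"
proof -
  interpret module R M by fact
  obtain S where S: "finite S" "S \<subseteq> carrier M" "carrier M \<subseteq> lcs R M S"
    using fin_gen_lcs[THEN iffD1, OF fg] by blast
  obtain h where h: "bij_betw h {0..<card S} S" using ex_bij_betw_nat_finite[OF S(1)] by blast
  define m where "m = card S"
  have hS: "h ` {..<m} = S" "inj_on h {..<m}" using h unfolding m_def bij_betw_def
    by (auto simp: atLeast0LessThan)
  have hc: "h \<in> {..<m} \<rightarrow> carrier M" using hS S by auto
  have "\<forall>x\<in>carrier M. \<exists>c. (\<forall>i. c i \<in> carrier R) \<and> x = lcomb M m h c"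
  proof
    fix x assume "x \<in> carrier M"
    then obtain c0 where c0: "c0 \<in> S \<rightarrow> carrier R" "x = (\<Oplus>\<^bsub>M\<^esub>t\<in>S. c0 t \<odot>\<^bsub>M\<^esub> t)"
      using S unfolding lcs_def by blast
    define c where "c i = (if i < m then c0 (h i) else \<zero>\<^bsub>R\<^esub>)" for i
    have cc: "\<forall>i. c i \<in> carrier R" unfolding c_def using c0 hS by auto
    have tc: "(\<lambda>t. c0 t \<odot>\<^bsub>M\<^esub> t) \<in> h ` {..<m} \<rightarrow> carrier M" using c0 hS S by auto
    have "x = (\<Oplus>\<^bsub>M\<^esub>i\<in>{..<m}. c0 (h i) \<odot>\<^bsub>M\<^esub> h i)"
      unfolding c0(2) using M.finsum_reindex[OF tc hS(2)] hS(1) by simp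
    also have "\<dots> = lcomb M m h c"
      unfolding lcomb_def using cc hc by (intro fs_cong) (auto simp: c_def)
    finally show "\<exists>c. (\<forall>i. c i \<in> carrier R) \<and> x = lcomb M m h c" using cc by blast
  qed
  thus ?thesis using hc by blast
qed

lemma lcomb_closed:
  assumes "module R M" "s \<in> {..<m} \<rightarrow> carrier M" "\<forall>i. c i \<in> carrier R"
  shows "lcomb M m s c \<in> carrier M"
proof -
  interpret module R M by fact
  show ?thesis unfolding lcomb_def using assms by (intro M.finsum_closed) auto
qed

lemma fib_eq:
  assumes mod: "module R M" and s: "s \<in> {..<m} \<rightarrow> carrier M"
    and surj: "\<forall>x\<in>carrier M. \<exists>c. (\<forall>i. c i \<in> carrier R) \<and> x = lcomb M m s c"
    and N: "N \<subseteq> carrier M" "\<zero>\<^bsub>M\<^esub> \<in> N" "\<And>x y. x \<in> N \<Longrightarrow> y \<in> N \<Longrightarrow> x \<oplus>\<^bsub>M\<^esub> y \<in> N"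
      "\<And>x. x \<in> N \<Longrightarrow> \<ominus>\<^bsub>M\<^esub> x \<in> N"
    and xy: "x \<in> carrier M" "y \<in> carrier M"
  shows "fib R M m s N x = fib R M m s N y \<longleftrightarrow> x \<ominus>\<^bsub>M\<^esub> y \<in> N"
proof -
  interpret module R M by fact
  have tri: "\<And>a b d. a \<in> carrier M \<Longrightarrow> b \<in> carrier M \<Longrightarrow> d \<in> carrier M \<Longrightarrow>
      (a \<ominus>\<^bsub>M\<^esub> b) \<oplus>\<^bsub>M\<^esub> (b \<ominus>\<^bsub>M\<^esub> d) = a \<ominus>\<^bsub>M\<^esub> d"
    by (simp add: a_minus_def M.a_assoc[symmetric]) (simp add: M.a_assoc M.l_neg)
  have neg: "\<ominus>\<^bsub>M\<^esub> (x \<ominus>\<^bsub>M\<^esub> y) = y \<ominus>\<^bsub>M\<^esub> x"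
    using xy by (simp add: a_minus_def M.minus_add M.minus_minus M.a_comm)
  show ?thesis
  proof
    assume eq: "fib R M m s N x = fib R M m s N y"
    obtain c where c: "\<forall>i. c i \<in> carrier R" "x = lcomb M m s c" using surj xy by blast
    have "c \<in> fib R M m s N x" unfolding fib_def using c N xy by (simp add: M.r_neg a_minus_def)
    hence "c \<in> fib R M m s N y" using eq by simp
    thus "x \<ominus>\<^bsub>M\<^esub> y \<in> N" unfolding fib_def using c by simp
  next
    assume d: "x \<ominus>\<^bsub>M\<^esub> y \<in> N"
    have d': "y \<ominus>\<^bsub>M\<^esub> x \<in> N" using N(4)[OF d] neg by simp
    show "fib R M m s N x = fib R M m s N y"
    proof (intro subset_antisym subsetI)
      fix c assume "c \<in> fib R M m s N x"
      hence c: "\<forall>i. c i \<in> carrier R" "lcomb M m s c \<ominus>\<^bsub>M\<^esub> x \<in> N" unfolding fib_def by auto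
      have lc: "lcomb M m s c \<in> carrier M" using lcomb_closed[OF mod s c(1)] .
      have "lcomb M m s c \<ominus>\<^bsub>M\<^esub> y = (lcomb M m s c \<ominus>\<^bsub>M\<^esub> x) \<oplus>\<^bsub>M\<^esub> (x \<ominus>\<^bsub>M\<^esub> y)"
        using tri[OF lc xy] by simp
      also have "\<dots> \<in> N" using N(3) c(2) d by blast
      finally show "c \<in> fib R M m s N y" unfolding fib_def using c by simp
    next
      fix c assume "c \<in> fib R M m s N y"
      hence c: "\<forall>i. c i \<in> carrier R" "lcomb M m s c \<ominus>\<^bsub>M\<^esub> y \<in> N" unfolding fib_def by auto
      have lc: "lcomb M m s c \<in> carrier M" using lcomb_closed[OF mod s c(1)] .
      have "lcomb M m s c \<ominus>\<^bsub>M\<^esub> x = (lcomb M m s c \<ominus>\<^bsub>M\<^esub> y) \<oplus>\<^bsub>M\<^esub> (y \<ominus>\<^bsub>M\<^esub> x)"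
        using tri[OF lc xy(2) xy(1)] by simp
      also have "\<dots> \<in> N" using N(3) c(2) d' by blast
      finally show "c \<in> fib R M m s N x" unfolding fib_def using c by simp
    qed
  qed
qed

lemma rep_rho_zero:
  assumes "is_rep G R M rho" "g \<in> carrier G"
  shows "rho g \<zero>\<^bsub>M\<^esub> = \<zero>\<^bsub>M\<^esub>"
proof -
  interpret module R M using rep_module[OF assms(1)] .
  have c: "rho g \<zero>\<^bsub>M\<^esub> \<in> carrier M" using assms unfolding is_rep_def by simp
  have "rho g (\<zero>\<^bsub>R\<^esub> \<odot>\<^bsub>M\<^esub> \<zero>\<^bsub>M\<^esub>) = \<zero>\<^bsub>R\<^esub> \<odot>\<^bsub>M\<^esub> rho g \<zero>\<^bsub>M\<^esub>"
    using assms R.zero_closed M.zero_closed unfolding is_rep_def by blast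
  thus ?thesis using c by simp
qed

lemma exists_injctx:
  fixes R :: "'r ring" and M :: "('r,'m) module"
  assumes "in_Rep G R M rho"
  shows "\<exists>q :: 'm \<Rightarrow> (nat \<Rightarrow> 'r) set. injctx G R M rho q"
proof -
  have rep: "is_rep G R M rho" and fg: "fin_gen R M" using assms unfolding in_Rep_def by blast+
  have mod: "module R M" using rep_module[OF rep] .
  interpret module R M by fact
  obtain m s where s: "s \<in> {..<m} \<rightarrow> carrier M"
    and surj: "\<forall>x\<in>carrier M. \<exists>c. (\<forall>i. c i \<in> carrier R) \<and> x = lcomb M m s c"
    using fin_gen_enum[OF mod fg] by blast
  have "injctx G R M rho (fib R M m s {\<zero>\<^bsub>M\<^esub>})"
    unfolding injctx_def pushctx_def
  proof (intro conjI rep allI impI)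
    fix x y assume "x \<in> carrier M" "y \<in> carrier M"
    thus "(fib R M m s {\<zero>\<^bsub>M\<^esub>} x = fib R M m s {\<zero>\<^bsub>M\<^esub>} y) = (x \<ominus>\<^bsub>M\<^esub> y \<in> {\<zero>\<^bsub>M\<^esub>})"
      using fib_eq[OF mod s surj, of "{\<zero>\<^bsub>M\<^esub>}" x y] by (simp add: M.add.inv_one)
  qed (auto simp: rep_rho_zero[OF rep])
  thus ?thesis by blast
qed

lemma exists_quot:
  fixes R :: "'r ring" and M :: "('r,'m) module"
  assumes "in_Rep G R M rho" and p: "p \<in> carrier R"
  shows "\<exists>q :: 'm \<Rightarrow> (nat \<Rightarrow> 'r) set. pushctx G R M rho ((\<lambda>x. p \<odot>\<^bsub>M\<^esub> x) ` carrier M) q"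
proof -
  have rep: "is_rep G R M rho" and fg: "fin_gen R M" using assms unfolding in_Rep_def by blast+
  have mod: "module R M" using rep_module[OF rep] .
  interpret module R M by fact
  obtain m s where s: "s \<in> {..<m} \<rightarrow> carrier M"
    and surj: "\<forall>x\<in>carrier M. \<exists>c. (\<forall>i. c i \<in> carrier R) \<and> x = lcomb M m s c"
    using fin_gen_enum[OF mod fg] by blast
  define N where "N = (\<lambda>x. p \<odot>\<^bsub>M\<^esub> x) ` carrier M"
  have N1: "N \<subseteq> carrier M" unfolding N_def using p by auto
  have N2: "\<zero>\<^bsub>M\<^esub> \<in> N" unfolding N_def using p
    by (intro image_eqI[of _ _ "\<zero>\<^bsub>M\<^esub>"]) auto
  have N3: "x \<oplus>\<^bsub>M\<^esub> y \<in> N" if "x \<in> N" "y \<in> N" for x y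
    using that p unfolding N_def by (auto simp: smult_r_distr[symmetric])
  have N4: "\<ominus>\<^bsub>M\<^esub> x \<in> N" if "x \<in> N" for x
    using that p unfolding N_def by (auto simp: smult_r_minus[symmetric])
  have N5: "a \<odot>\<^bsub>M\<^esub> x \<in> N" if H: "a \<in> carrier R" "x \<in> N" for a x
  proof -
    obtain y where y: "y \<in> carrier M" "x = p \<odot>\<^bsub>M\<^esub> y" using H unfolding N_def by auto
    have "a \<odot>\<^bsub>M\<^esub> x = p \<odot>\<^bsub>M\<^esub> (a \<odot>\<^bsub>M\<^esub> y)"
      using y H p by (simp add: smult_assoc1[symmetric] R.m_comm)
    thus ?thesis unfolding N_def using y H by auto
  qed
  have N6: "rho g x \<in> N" if H: "g \<in> carrier G" "x \<in> N" for g x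
  proof -
    obtain y where y: "y \<in> carrier M" "x = p \<odot>\<^bsub>M\<^esub> y" using H unfolding N_def by auto
    have "rho g x = p \<odot>\<^bsub>M\<^esub> rho g y" using y H p rep unfolding is_rep_def by simp
    moreover have "rho g y \<in> carrier M" using y H rep unfolding is_rep_def by simp
    ultimately show ?thesis unfolding N_def by auto
  qed
  have "pushctx G R M rho N (fib R M m s N)"
    unfolding pushctx_def
    using rep N1 N2 N3 N5 N6 fib_eq[OF mod s surj N1 N2 N3 N4] by blast
  thus ?thesis unfolding N_def by blast
qed

lemma free_tf:
  assumes mod: "module R M" and dom: "domain R" and ff: "fin_free R M"
    and a: "a \<in> carrier R" "a \<noteq> \<zero>\<^bsub>R\<^esub>" and x: "x \<in> carrier M" and ax: "a \<odot>\<^bsub>M\<^esub> x = \<zero>\<^bsub>M\<^esub>"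
  shows "x = \<zero>\<^bsub>M\<^esub>"
proof -
  interpret module R M by fact
  interpret D: domain R by fact
  obtain B where B: "finite B" "B \<subseteq> carrier M"
    and uq: "\<forall>x\<in>carrier M. \<exists>!c. c \<in> B \<rightarrow>\<^sub>E carrier R \<and> x = (\<Oplus>\<^bsub>M\<^esub>b\<in>B. c b \<odot>\<^bsub>M\<^esub> b)"
    using ff unfolding fin_free_def by blast
  obtain c where c: "c \<in> B \<rightarrow>\<^sub>E carrier R" "x = (\<Oplus>\<^bsub>M\<^esub>b\<in>B. c b \<odot>\<^bsub>M\<^esub> b)" using uq x by blast
  have bc: "\<And>b. b \<in> B \<Longrightarrow> b \<in> carrier M" "\<And>b. b \<in> B \<Longrightarrow> c b \<in> carrier R" using B c by auto
  define c1 where "c1 = (\<lambda>b\<in>B. a \<otimes>\<^bsub>R\<^esub> c b)"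
  define c2 where "c2 = (\<lambda>b\<in>B. \<zero>\<^bsub>R\<^esub>)"
  have c1E: "c1 \<in> B \<rightarrow>\<^sub>E carrier R" unfolding c1_def using bc a by auto
  have c2E: "c2 \<in> B \<rightarrow>\<^sub>E carrier R" unfolding c2_def by auto
  have "a \<odot>\<^bsub>M\<^esub> x = (\<Oplus>\<^bsub>M\<^esub>b\<in>B. a \<odot>\<^bsub>M\<^esub> (c b \<odot>\<^bsub>M\<^esub> b))"
    unfolding c(2) using B bc a by (intro finsum_smult_ldistr) auto
  also have "\<dots> = (\<Oplus>\<^bsub>M\<^esub>b\<in>B. c1 b \<odot>\<^bsub>M\<^esub> b)"
    using bc a by (intro fs_cong) (auto simp: c1_def smult_assoc1)
  finally have e1: "\<zero>\<^bsub>M\<^esub> = (\<Oplus>\<^bsub>M\<^esub>b\<in>B. c1 b \<odot>\<^bsub>M\<^esub> b)" using ax by simp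
  have "(\<Oplus>\<^bsub>M\<^esub>b\<in>B. c2 b \<odot>\<^bsub>M\<^esub> b) = (\<Oplus>\<^bsub>M\<^esub>b\<in>B. \<zero>\<^bsub>M\<^esub>)"
    using bc by (intro fs_cong) (auto simp: c2_def)
  hence e2: "\<zero>\<^bsub>M\<^esub> = (\<Oplus>\<^bsub>M\<^esub>b\<in>B. c2 b \<odot>\<^bsub>M\<^esub> b)" by simp
  have "c1 = c2" using uq[rule_format, OF M.zero_closed] c1E c2E e1 e2 by blast
  hence "\<And>b. b \<in> B \<Longrightarrow> a \<otimes>\<^bsub>R\<^esub> c b = \<zero>\<^bsub>R\<^esub>"
  proof -
    fix b assume "c1 = c2" "b \<in> B"
    have "c1 b = c2 b" using \<open>c1 = c2\<close> by simp
    thus "a \<otimes>\<^bsub>R\<^esub> c b = \<zero>\<^bsub>R\<^esub>" using \<open>b \<in> B\<close> by (simp add: c1_def c2_def)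
  qed
  hence cz: "\<And>b. b \<in> B \<Longrightarrow> c b = \<zero>\<^bsub>R\<^esub>" using a bc D.integral by blast
  have "x = (\<Oplus>\<^bsub>M\<^esub>b\<in>B. \<zero>\<^bsub>M\<^esub>)" unfolding c(2) using bc cz by (intro fs_cong) auto
  thus ?thesis by simp
qed

locale dvrmod = dvr R p + module R M
  for R :: "'a ring" (structure) and p and M :: "('a, 'c) module" (structure)

context dvrmod begin

lemma descent:
  assumes S: "finite S" "S \<subseteq> carrier M"
    and tf: "\<And>x. x \<in> carrier M \<Longrightarrow> p \<odot>\<^bsub>M\<^esub> x = \<zero>\<^bsub>M\<^esub> \<Longrightarrow> x = \<zero>\<^bsub>M\<^esub>"
  shows "a \<in> S \<rightarrow> carrier R \<Longrightarrow> (\<Oplus>\<^bsub>M\<^esub>s\<in>S. a s \<odot>\<^bsub>M\<^esub> s) = \<zero>\<^bsub>M\<^esub> \<Longrightarrow> s0 \<in> S \<Longrightarrow> u \<in> Units R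
    \<Longrightarrow> a s0 = u \<otimes> p [^] (j::nat) \<Longrightarrow>
    \<exists>a'. a' \<in> S \<rightarrow> carrier R \<and> (\<Oplus>\<^bsub>M\<^esub>s\<in>S. a' s \<odot>\<^bsub>M\<^esub> s) = \<zero>\<^bsub>M\<^esub> \<and> (\<exists>s1\<in>S. a' s1 \<in> Units R)"
proof (induction j arbitrary: a)
  case 0
  hence "a s0 \<in> Units R" by simp
  thus ?case using 0 by blast
next
  case (Suc j)
  show ?case
  proof (cases "\<exists>s\<in>S. a s \<in> Units R")
    case True thus ?thesis using Suc.prems by blast
  next
    case False
    hence ex: "\<forall>s\<in>S. \<exists>y\<in>carrier R. a s = y \<otimes> p" using nonunit_mult_p Suc.prems(1) by blast
    define a' where "a' s = (SOME y. y \<in> carrier R \<and> a s = y \<otimes> p)" for s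
    have a': "\<And>s. s \<in> S \<Longrightarrow> a' s \<in> carrier R \<and> a s = a' s \<otimes> p"
    proof -
      fix s assume "s \<in> S"
      hence "\<exists>y. y \<in> carrier R \<and> a s = y \<otimes> p" using ex by blast
      thus "a' s \<in> carrier R \<and> a s = a' s \<otimes> p" unfolding a'_def by (rule someI_ex)
    qed
    have sc: "\<And>s. s \<in> S \<Longrightarrow> s \<in> carrier M" using S by auto
    have "(\<Oplus>\<^bsub>M\<^esub>s\<in>S. a s \<odot>\<^bsub>M\<^esub> s) = (\<Oplus>\<^bsub>M\<^esub>s\<in>S. p \<odot>\<^bsub>M\<^esub> (a' s \<odot>\<^bsub>M\<^esub> s))"
      using a' sc p_carr by (intro fs_cong) (auto simp: smult_assoc1[symmetric] m_comm)
    also have "\<dots> = p \<odot>\<^bsub>M\<^esub> (\<Oplus>\<^bsub>M\<^esub>s\<in>S. a' s \<odot>\<^bsub>M\<^esub> s)"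
      using a' sc p_carr S by (intro finsum_smult_ldistr[symmetric]) auto
    finally have "p \<odot>\<^bsub>M\<^esub> (\<Oplus>\<^bsub>M\<^esub>s\<in>S. a' s \<odot>\<^bsub>M\<^esub> s) = \<zero>\<^bsub>M\<^esub>" using Suc.prems(2) by simp
    hence z: "(\<Oplus>\<^bsub>M\<^esub>s\<in>S. a' s \<odot>\<^bsub>M\<^esub> s) = \<zero>\<^bsub>M\<^esub>"
      using tf a' sc by (auto intro!: M.finsum_closed)
    have uc: "u \<in> carrier R" using Suc.prems(4) by auto
    have "a' s0 \<otimes> p = (u \<otimes> p [^] j) \<otimes> p"
      using a'[OF Suc.prems(3)] Suc.prems(5) uc p_carr by (simp add: m_assoc)
    hence "a' s0 = u \<otimes> p [^] j"
      using m_rcancel[of p "a' s0" "u \<otimes> p [^] j"] p_nz p_carr a'[OF Suc.prems(3)] uc by simp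
    moreover have "a' \<in> S \<rightarrow> carrier R" using a' by auto
    ultimately show ?thesis using Suc.IH[of a'] z Suc.prems(3,4) by blast
  qed
qed

end

context dvr begin
lemma minus_plus_cancel: "c \<in> carrier R \<Longrightarrow> d \<in> carrier R \<Longrightarrow> (c \<ominus> d) \<oplus> d = c"
  by (simp add: a_minus_def a_assoc l_neg)
end

context dvrmod begin

lemma tf_free:
  assumes fg: "fin_gen R M"
    and tf: "\<And>x. x \<in> carrier M \<Longrightarrow> p \<odot>\<^bsub>M\<^esub> x = \<zero>\<^bsub>M\<^esub> \<Longrightarrow> x = \<zero>\<^bsub>M\<^esub>"
  shows "fin_free R M"
proof -
  define P where "P S \<longleftrightarrow> finite S \<and> S \<subseteq> carrier M \<and> carrier M \<subseteq> lcs R M S" for S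
  obtain S0 where "P S0" using fin_gen_lcs[THEN iffD1, OF fg] unfolding P_def by blast
  then obtain S where PS: "P S" and minS: "\<And>S'. P S' \<Longrightarrow> card S \<le> card S'"
    using ex_has_least_nat[of P S0 card] by blast
  have Sf: "finite S" and Ss: "S \<subseteq> carrier M" and Sg: "carrier M \<subseteq> lcs R M S"
    using PS unfolding P_def by auto
  have sc: "\<And>s. s \<in> S \<Longrightarrow> s \<in> carrier M" using Ss by auto
  have uniq: "c = d" if c: "c \<in> S \<rightarrow>\<^sub>E carrier R" and d: "d \<in> S \<rightarrow>\<^sub>E carrier R"
    and eq: "(\<Oplus>\<^bsub>M\<^esub>s\<in>S. c s \<odot>\<^bsub>M\<^esub> s) = (\<Oplus>\<^bsub>M\<^esub>s\<in>S. d s \<odot>\<^bsub>M\<^esub> s)" for c d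
  proof (rule ccontr)
    assume ne: "c \<noteq> d"
    obtain s0 where s0: "s0 \<in> S" "c s0 \<noteq> d s0" using ne PiE_ext[OF c d] by blast
    have cc: "\<And>s. s \<in> S \<Longrightarrow> c s \<in> carrier R" and dc: "\<And>s. s \<in> S \<Longrightarrow> d s \<in> carrier R"
      using c d by auto
    define a where "a s = c s \<ominus> d s" for s
    have ac: "\<And>s. s \<in> S \<Longrightarrow> a s \<in> carrier R" unfolding a_def using cc dc by simp
    have cad: "c s = a s \<oplus> d s" if H: "s \<in> S" for s
    proof -
      have "c s \<in> carrier R" "d s \<in> carrier R" using cc dc H by auto
      thus ?thesis unfolding a_def by (simp add: minus_plus_cancel)
    qed
    have "(\<Oplus>\<^bsub>M\<^esub>s\<in>S. c s \<odot>\<^bsub>M\<^esub> s) = (\<Oplus>\<^bsub>M\<^esub>s\<in>S. a s \<odot>\<^bsub>M\<^esub> s \<oplus>\<^bsub>M\<^esub> d s \<odot>\<^bsub>M\<^esub> s)"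
      using cad ac dc sc by (intro fs_cong) (auto simp: smult_l_distr)
    also have "\<dots> = (\<Oplus>\<^bsub>M\<^esub>s\<in>S. a s \<odot>\<^bsub>M\<^esub> s) \<oplus>\<^bsub>M\<^esub> (\<Oplus>\<^bsub>M\<^esub>s\<in>S. d s \<odot>\<^bsub>M\<^esub> s)"
      using ac dc sc by (intro M.finsum_addf) auto
    finally have "(\<Oplus>\<^bsub>M\<^esub>s\<in>S. a s \<odot>\<^bsub>M\<^esub> s) \<oplus>\<^bsub>M\<^esub> (\<Oplus>\<^bsub>M\<^esub>s\<in>S. d s \<odot>\<^bsub>M\<^esub> s)
        = \<zero>\<^bsub>M\<^esub> \<oplus>\<^bsub>M\<^esub> (\<Oplus>\<^bsub>M\<^esub>s\<in>S. d s \<odot>\<^bsub>M\<^esub> s)"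
      using eq dc sc by (simp add: M.finsum_closed Pi_iff)
    hence rel: "(\<Oplus>\<^bsub>M\<^esub>s\<in>S. a s \<odot>\<^bsub>M\<^esub> s) = \<zero>\<^bsub>M\<^esub>"
      using M.add.right_cancel ac dc sc by (simp add: M.finsum_closed Pi_iff)
    have "a s0 \<noteq> \<zero>"
    proof
      assume "a s0 = \<zero>"
      hence "c s0 = d s0" using cad[OF s0(1)] dc[OF s0(1)] by simp
      thus False using s0 by simp
    qed
    then obtain u j where uj: "u \<in> Units R" "a s0 = u \<otimes> p [^] (j::nat)"
      using val_decomp ac s0 by blast
    obtain a' s1 where a': "a' \<in> S \<rightarrow> carrier R" "(\<Oplus>\<^bsub>M\<^esub>s\<in>S. a' s \<odot>\<^bsub>M\<^esub> s) = \<zero>\<^bsub>M\<^esub>"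
        and s1: "s1 \<in> S" "a' s1 \<in> Units R"
      using descent[OF Sf Ss tf, of a s0 u j] ac rel s0(1) uj by blast
    define S' where "S' = S - {s1}"
    have S'f: "finite S'" and S's: "S' \<subseteq> carrier M" using Sf Ss unfolding S'_def by auto
    have SS': "S = insert s1 S'" "s1 \<notin> S'" using s1 unfolding S'_def by auto
    have a'c: "\<And>s. s \<in> S \<Longrightarrow> a' s \<in> carrier R" using a' by auto
    define y where "y = (\<Oplus>\<^bsub>M\<^esub>s\<in>S'. a' s \<odot>\<^bsub>M\<^esub> s)"
    have yl: "y \<in> lcs R M S'" unfolding y_def
    proof (rule lcs_finsum[OF S'f S's S'f])
      show "(\<lambda>s. a' s \<odot>\<^bsub>M\<^esub> s) \<in> S' \<rightarrow> lcs R M S'"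
      proof
        fix x assume "x \<in> S'"
        thus "a' x \<odot>\<^bsub>M\<^esub> x \<in> lcs R M S'"
          using lcs_smult[OF S'f S's lcs_gen[OF S'f S's], of x "a' x"] a'c SS' by auto
      qed
    qed
    have yc: "y \<in> carrier M" using yl lcs_carr[OF S'f S's] by blast
    have u1: "a' s1 \<odot>\<^bsub>M\<^esub> s1 \<oplus>\<^bsub>M\<^esub> y = \<zero>\<^bsub>M\<^esub>"
      using a'(2) unfolding y_def SS'(1) using M.finsum_insert[OF S'f SS'(2)] a'c SS' sc
      by (simp add: Pi_iff)
    have ny: "\<ominus>\<^bsub>M\<^esub> y = a' s1 \<odot>\<^bsub>M\<^esub> s1"
      using M.minus_equality[OF u1] yc a'c s1 sc by simp
    have "inv (a' s1) \<odot>\<^bsub>M\<^esub> (\<ominus>\<^bsub>M\<^esub> y) = (inv (a' s1) \<otimes> a' s1) \<odot>\<^bsub>M\<^esub> s1"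
      unfolding ny by (rule smult_assoc1[symmetric]) (use s1 a'c sc in auto)
    also have "\<dots> = s1" using s1 sc by simp
    finally have "s1 \<in> lcs R M S'"
      using lcs_smult[OF S'f S's lcs_neg[OF S'f S's yl], of "inv (a' s1)"] s1 by simp
    hence "S \<subseteq> lcs R M S'" using SS' lcs_gen[OF S'f S's] by auto
    hence "lcs R M S \<subseteq> lcs R M S'"
      by (intro lcs_min[OF Sf] lcs_carr[OF S'f S's] lcs_zero[OF S'f S's] lcs_add[OF S'f S's]
          lcs_smult[OF S'f S's])
    hence "P S'" unfolding P_def using S'f S's Sg by auto
    hence "card S \<le> card S'" using minS by blast
    moreover have "card S' < card S" unfolding S'_def using card_Diff1_less[OF Sf s1(1)] .
    ultimately show False by simp
  qed
  have "\<forall>x\<in>carrier M. \<exists>!c. c \<in> S \<rightarrow>\<^sub>E carrier R \<and> x = (\<Oplus>\<^bsub>M\<^esub>s\<in>S. c s \<odot>\<^bsub>M\<^esub> s)"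
  proof
    fix x assume "x \<in> carrier M"
    then obtain c where c: "c \<in> S \<rightarrow> carrier R" "x = (\<Oplus>\<^bsub>M\<^esub>s\<in>S. c s \<odot>\<^bsub>M\<^esub> s)"
      using Sg unfolding lcs_def by blast
    have "x = (\<Oplus>\<^bsub>M\<^esub>s\<in>S. restrict c S s \<odot>\<^bsub>M\<^esub> s)"
      unfolding c(2) using c sc by (intro fs_cong) (auto simp: Pi_iff)
    moreover have "restrict c S \<in> S \<rightarrow>\<^sub>E carrier R" using c by auto
    ultimately show "\<exists>!c. c \<in> S \<rightarrow>\<^sub>E carrier R \<and> x = (\<Oplus>\<^bsub>M\<^esub>s\<in>S. c s \<odot>\<^bsub>M\<^esub> s)"
      using uniq by blast
  qed
  thus ?thesis unfolding fin_free_def using Sf Ss by blast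
qed

end

lemma (in abelian_group) minus_eq0_iff:
  "x \<in> carrier G \<Longrightarrow> y \<in> carrier G \<Longrightarrow> x \<ominus> y = \<zero> \<longleftrightarrow> x = y"
proof
  assume xy: "x \<in> carrier G" "y \<in> carrier G" and e: "x \<ominus> y = \<zero>"
  have "x = (x \<ominus> y) \<oplus> y" using xy by (simp add: a_minus_def a_assoc l_neg)
  thus "x = y" using e xy by simp
next
  assume "x \<in> carrier G" "y \<in> carrier G" "x = y"
  thus "x \<ominus> y = \<zero>" by (simp add: a_minus_def r_neg)
qed

lemma exists_coord:
  fixes R :: "'r ring" and M :: "('r,'m) module"
  assumes mod: "module R M" and ff: "fin_free R M"
  shows "\<exists>k :: 'm \<Rightarrow> (nat \<Rightarrow> 'r). inj_on k (carrier M)"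
proof -
  interpret module R M by fact
  obtain B where B: "finite B" "B \<subseteq> carrier M"
    and uq: "\<forall>x\<in>carrier M. \<exists>!c. c \<in> B \<rightarrow>\<^sub>E carrier R \<and> x = (\<Oplus>\<^bsub>M\<^esub>b\<in>B. c b \<odot>\<^bsub>M\<^esub> b)"
    using ff unfolding fin_free_def by blast
  obtain h where h: "bij_betw h {0..<card B} B" using ex_bij_betw_nat_finite[OF B(1)] by blast
  define coef where "coef x = (THE c. c \<in> B \<rightarrow>\<^sub>E carrier R \<and> x = (\<Oplus>\<^bsub>M\<^esub>b\<in>B. c b \<odot>\<^bsub>M\<^esub> b))" for x
  have coef: "coef x \<in> B \<rightarrow>\<^sub>E carrier R \<and> x = (\<Oplus>\<^bsub>M\<^esub>b\<in>B. coef x b \<odot>\<^bsub>M\<^esub> b)"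
    if "x \<in> carrier M" for x
    unfolding coef_def by (rule theI'[OF uq[rule_format, OF that]])
  define k where "k x = (\<lambda>i. coef x (h i))" for x
  have "inj_on k (carrier M)"
  proof (rule inj_onI)
    fix x y assume xy: "x \<in> carrier M" "y \<in> carrier M" "k x = k y"
    have "\<forall>b\<in>B. coef x b = coef y b"
    proof
      fix b assume "b \<in> B"
      then obtain i where "b = h i" using h unfolding bij_betw_def by auto
      thus "coef x b = coef y b" using fun_cong[OF xy(3), of i] unfolding k_def by simp
    qed
    moreover have "coef x \<in> B \<rightarrow>\<^sub>E carrier R" "coef y \<in> B \<rightarrow>\<^sub>E carrier R"
      using coef[OF xy(1)] coef[OF xy(2)] by blast+
    ultimately have "coef x = coef y" by (intro PiE_ext) auto
    have "x = (\<Oplus>\<^bsub>M\<^esub>b\<in>B. coef x b \<odot>\<^bsub>M\<^esub> b)" using coef[OF xy(1)] by blast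
    also have "\<dots> = (\<Oplus>\<^bsub>M\<^esub>b\<in>B. coef y b \<odot>\<^bsub>M\<^esub> b)" using \<open>coef x = coef y\<close> by (simp only:)
    also have "\<dots> = y"
    proof -
      have "y = (\<Oplus>\<^bsub>M\<^esub>b\<in>B. coef y b \<odot>\<^bsub>M\<^esub> b)" using coef[OF xy(2)] by blast
      thus ?thesis by (rule sym)
    qed
    finally show "x = y" .
  qed
  thus ?thesis by blast
qed

lemma exists_injctx_free:
  fixes R :: "'r ring" and M :: "('r,'m) module"
  assumes rep: "is_rep G R M rho" and ff: "fin_free R M"
  shows "\<exists>q :: 'm \<Rightarrow> (nat \<Rightarrow> 'r). injctx G R M rho q"
proof -
  have mod: "module R M" using rep_module[OF rep] .
  interpret module R M by fact
  obtain k :: "'m \<Rightarrow> (nat \<Rightarrow> 'r)" where k: "inj_on k (carrier M)" using exists_coord[OF mod ff] by blast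
  have "injctx G R M rho k"
    unfolding injctx_def pushctx_def
  proof (intro conjI rep allI impI)
    fix x y assume xy: "x \<in> carrier M" "y \<in> carrier M"
    thus "(k x = k y) = (x \<ominus>\<^bsub>M\<^esub> y \<in> {\<zero>\<^bsub>M\<^esub>})"
      using k M.minus_eq0_iff[OF xy] unfolding inj_on_def by auto
  qed (auto simp: rep_rho_zero[OF rep])
  thus ?thesis by blast
qed

context injctx begin

lemma push_fin_free:
  assumes ff: "fin_free R M" shows "fin_free R (push M q)"
proof -
  interpret P: module R "push M q" by (rule push_module)
  obtain B where B: "finite B" "B \<subseteq> carrier M"
    and uq: "\<forall>x\<in>carrier M. \<exists>!c. c \<in> B \<rightarrow>\<^sub>E carrier R \<and> x = (\<Oplus>\<^bsub>M\<^esub>b\<in>B. c b \<odot>\<^bsub>M\<^esub> b)"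
    using ff unfolding fin_free_def by blast
  have bc: "\<And>b. b \<in> B \<Longrightarrow> b \<in> carrier M" using B by auto
  have injB: "inj_on q B" unfolding inj_on_def using q_inj bc by blast
  have qc: "q \<in> carrier M \<rightarrow> carrier (push M q)" by simp
  have pushsum: "q (\<Oplus>\<^bsub>M\<^esub>b\<in>B. d b \<odot>\<^bsub>M\<^esub> b) = (\<Oplus>\<^bsub>push M q\<^esub>t\<in>q ` B. d (prep M q t) \<odot>\<^bsub>push M q\<^esub> t)"
    if d: "\<And>b. b \<in> B \<Longrightarrow> d b \<in> carrier R" for d
  proof -
    have tc: "(\<lambda>b. d b \<odot>\<^bsub>M\<^esub> b) \<in> B \<rightarrow> carrier M" using d bc by simp
    have "q (\<Oplus>\<^bsub>M\<^esub>b\<in>B. d b \<odot>\<^bsub>M\<^esub> b) = (\<Oplus>\<^bsub>push M q\<^esub>b\<in>B. q (d b \<odot>\<^bsub>M\<^esub> b))"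
      by (rule finsum_hom[OF M.abelian_group_axioms P.abelian_group_axioms qc hom_add[symmetric] B(1) tc])
    also have "\<dots> = (\<Oplus>\<^bsub>push M q\<^esub>b\<in>B. d (prep M q (q b)) \<odot>\<^bsub>push M q\<^esub> q b)"
      using d bc by (intro P.fs_cong) (simp_all add: hom_smult prep_inv)
    also have "\<dots> = (\<Oplus>\<^bsub>push M q\<^esub>t\<in>q ` B. d (prep M q t) \<odot>\<^bsub>push M q\<^esub> t)"
      using d bc prep_inv by (intro P.finsum_reindex[symmetric] injB) (auto simp: hom_smult)
    finally show ?thesis .
  qed
  have "\<forall>u\<in>carrier (push M q). \<exists>!c. c \<in> q ` B \<rightarrow>\<^sub>E carrier R \<and>
          u = (\<Oplus>\<^bsub>push M q\<^esub>t\<in>q ` B. c t \<odot>\<^bsub>push M q\<^esub> t)"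
  proof
    fix u assume "u \<in> carrier (push M q)"
    then obtain x where x: "x \<in> carrier M" "u = q x" by auto
    obtain c0 where c0: "c0 \<in> B \<rightarrow>\<^sub>E carrier R" "x = (\<Oplus>\<^bsub>M\<^esub>b\<in>B. c0 b \<odot>\<^bsub>M\<^esub> b)"
      using uq x by blast
    define c where "c = (\<lambda>t\<in>q ` B. c0 (prep M q t))"
    have cE: "c \<in> q ` B \<rightarrow>\<^sub>E carrier R" unfolding c_def using c0 bc prep_inv by auto
    have "u = (\<Oplus>\<^bsub>push M q\<^esub>t\<in>q ` B. c0 (prep M q t) \<odot>\<^bsub>push M q\<^esub> t)"
      using pushsum[of c0] c0 x by auto
    also have "\<dots> = (\<Oplus>\<^bsub>push M q\<^esub>t\<in>q ` B. c t \<odot>\<^bsub>push M q\<^esub> t)"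
      using c0 bc prep_inv by (intro P.fs_cong) (auto simp: c_def hom_smult PiE_iff)
    finally have ex: "u = (\<Oplus>\<^bsub>push M q\<^esub>t\<in>q ` B. c t \<odot>\<^bsub>push M q\<^esub> t)" .
    have un: "d = c" if dE: "d \<in> q ` B \<rightarrow>\<^sub>E carrier R"
      and du: "u = (\<Oplus>\<^bsub>push M q\<^esub>t\<in>q ` B. d t \<odot>\<^bsub>push M q\<^esub> t)" for d
    proof -
      define d0 where "d0 = (\<lambda>b\<in>B. d (q b))"
      have d0E: "d0 \<in> B \<rightarrow>\<^sub>E carrier R" unfolding d0_def using dE by auto
      have d0c: "\<And>b. b \<in> B \<Longrightarrow> d0 b \<in> carrier R" using d0E by auto
      have "(\<Oplus>\<^bsub>push M q\<^esub>t\<in>q ` B. d t \<odot>\<^bsub>push M q\<^esub> t) = (\<Oplus>\<^bsub>push M q\<^esub>t\<in>q ` B. d0 (prep M q t) \<odot>\<^bsub>push M q\<^esub> t)"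
        using dE bc prep_inv d0c by (intro P.fs_cong) (auto simp: d0_def hom_smult PiE_iff)
      also have "\<dots> = q (\<Oplus>\<^bsub>M\<^esub>b\<in>B. d0 b \<odot>\<^bsub>M\<^esub> b)" using pushsum[of d0] d0c by simp
      finally have "q x = q (\<Oplus>\<^bsub>M\<^esub>b\<in>B. d0 b \<odot>\<^bsub>M\<^esub> b)" using du x by simp
      moreover have "(\<Oplus>\<^bsub>M\<^esub>b\<in>B. d0 b \<odot>\<^bsub>M\<^esub> b) \<in> carrier M" using d0c bc by (intro M.finsum_closed) auto
      ultimately have "x = (\<Oplus>\<^bsub>M\<^esub>b\<in>B. d0 b \<odot>\<^bsub>M\<^esub> b)" using q_inj x by blast
      hence "d0 = c0" using uq x c0 d0E by blast
      show "d = c"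
      proof (rule PiE_ext[OF dE cE])
        fix t assume "t \<in> q ` B"
        then obtain b where b: "b \<in> B" "t = q b" by auto
        have "d0 b = c0 b" using \<open>d0 = c0\<close> by simp
        thus "d t = c t" using b bc prep_inv unfolding d0_def c_def by auto
      qed
    qed
    show "\<exists>!c. c \<in> q ` B \<rightarrow>\<^sub>E carrier R \<and> u = (\<Oplus>\<^bsub>push M q\<^esub>t\<in>q ` B. c t \<odot>\<^bsub>push M q\<^esub> t)"
      using cE ex un by blast
  qed
  moreover have "finite (q ` B)" "q ` B \<subseteq> carrier (push M q)" using B by auto
  ultimately show ?thesis unfolding fin_free_def by blast
qed

end

lemma base_lift:
  fixes R :: "'r ring" and E :: "('r,'e) module"
  assumes dv: "dvr R p" and E: "in_Rep G R E sig"
    and tf: "\<And>x. x \<in> carrier E \<Longrightarrow> p \<odot>\<^bsub>E\<^esub> x = \<zero>\<^bsub>E\<^esub> \<Longrightarrow> x = \<zero>\<^bsub>E\<^esub>"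
  shows "has_weak_lift G R E sig"
proof -
  have rep: "is_rep G R E sig" and fg: "fin_gen R E" using E unfolding in_Rep_def by blast+
  interpret dvrmod R p E unfolding dvrmod_def using dv rep_module[OF rep] by blast
  have ff: "fin_free R E" using tf_free[OF fg tf] .
  obtain k :: "'e \<Rightarrow> (nat \<Rightarrow> 'r)" where k: "injctx G R E sig k"
    using exists_injctx_free[OF rep ff] by blast
  interpret K: injctx G R E sig k by fact
  have "in_Rep_free G R (push E k) (pushrho E k sig)"
    unfolding in_Rep_free_def using K.push_rep K.push_fin_gen[OF fg] K.push_fin_free[OF ff] by blast
  hence "is_weak_lift G R E sig (push E k) (pushrho E k sig) (prep E k)"
    unfolding is_weak_lift_def using K.prep_hom K.prep_surj by blast
  thus ?thesis unfolding has_weak_lift_def by blast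
qed

definition tb :: "'r ring \<Rightarrow> ('r,'m) module \<Rightarrow> 'r \<Rightarrow> nat \<Rightarrow> bool" where
  "tb R M p n \<longleftrightarrow> (\<forall>x\<in>carrier M. (\<exists>k::nat. (p [^]\<^bsub>R\<^esub> k) \<odot>\<^bsub>M\<^esub> x = \<zero>\<^bsub>M\<^esub>) \<longrightarrow> (p [^]\<^bsub>R\<^esub> n) \<odot>\<^bsub>M\<^esub> x = \<zero>\<^bsub>M\<^esub>)"

lemma (in injctx) tb_push:
  assumes "tb R M p n" "p \<in> carrier R" shows "tb R (push M q) p n"
  unfolding tb_def
proof (intro ballI impI)
  fix u assume "u \<in> carrier (push M q)"
  then obtain x where x: "x \<in> carrier M" "u = q x" by auto
  assume "\<exists>k::nat. (p [^]\<^bsub>R\<^esub> k) \<odot>\<^bsub>push M q\<^esub> u = \<zero>\<^bsub>push M q\<^esub>"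
  then obtain k :: nat where "(p [^]\<^bsub>R\<^esub> k) \<odot>\<^bsub>push M q\<^esub> u = \<zero>\<^bsub>push M q\<^esub>" by blast
  hence "q ((p [^]\<^bsub>R\<^esub> k) \<odot>\<^bsub>M\<^esub> x) = \<zero>\<^bsub>push M q\<^esub>" using x assms by (simp add: hom_smult)
  hence "(p [^]\<^bsub>R\<^esub> k) \<odot>\<^bsub>M\<^esub> x = \<zero>\<^bsub>M\<^esub>" using q_zero_iff x assms by simp
  hence "(p [^]\<^bsub>R\<^esub> n) \<odot>\<^bsub>M\<^esub> x = \<zero>\<^bsub>M\<^esub>" using assms(1) x unfolding tb_def by blast
  thus "(p [^]\<^bsub>R\<^esub> n) \<odot>\<^bsub>push M q\<^esub> u = \<zero>\<^bsub>push M q\<^esub>" using x assms by (simp add: hom_smult)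
qed

definition pb :: "('r,'l) module \<Rightarrow> ('r,'e) module \<Rightarrow> ('l \<Rightarrow> 'v) \<Rightarrow> ('e \<Rightarrow> 'v) \<Rightarrow> ('r, 'l \<times> 'e) module" where
  "pb L E f q = \<lparr>carrier = {x. fst x \<in> carrier L \<and> snd x \<in> carrier E \<and> f (fst x) = q (snd x)},
     monoid.mult = (\<lambda>x y. x), one = (\<zero>\<^bsub>L\<^esub>, \<zero>\<^bsub>E\<^esub>), ring.zero = (\<zero>\<^bsub>L\<^esub>, \<zero>\<^bsub>E\<^esub>),
     ring.add = (\<lambda>x y. (fst x \<oplus>\<^bsub>L\<^esub> fst y, snd x \<oplus>\<^bsub>E\<^esub> snd y)),
     smult = (\<lambda>a x. (a \<odot>\<^bsub>L\<^esub> fst x, a \<odot>\<^bsub>E\<^esub> snd x))\<rparr>"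

lemma pb_simps[simp]:
  "carrier (pb L E f q) = {x. fst x \<in> carrier L \<and> snd x \<in> carrier E \<and> f (fst x) = q (snd x)}"
  "ring.zero (pb L E f q) = (\<zero>\<^bsub>L\<^esub>, \<zero>\<^bsub>E\<^esub>)"
  "ring.add (pb L E f q) x y = (fst x \<oplus>\<^bsub>L\<^esub> fst y, snd x \<oplus>\<^bsub>E\<^esub> snd y)"
  "smult (pb L E f q) a x = (a \<odot>\<^bsub>L\<^esub> fst x, a \<odot>\<^bsub>E\<^esub> snd x)"
  unfolding pb_def by simp_all

definition pbrho :: "('g \<Rightarrow> 'l \<Rightarrow> 'l) \<Rightarrow> ('g \<Rightarrow> 'e \<Rightarrow> 'e) \<Rightarrow> 'g \<Rightarrow> 'l \<times> 'e \<Rightarrow> 'l \<times> 'e" where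
  "pbrho lam sig g x = (lam g (fst x), sig g (snd x))"

lemma rep_hom_zero:
  assumes "module R A" "module R B" "rep_hom G R A a B b f"
  shows "f \<zero>\<^bsub>A\<^esub> = \<zero>\<^bsub>B\<^esub>"
proof -
  interpret A: module R A by fact
  interpret B: module R B by fact
  have "f (\<zero>\<^bsub>R\<^esub> \<odot>\<^bsub>A\<^esub> \<zero>\<^bsub>A\<^esub>) = \<zero>\<^bsub>R\<^esub> \<odot>\<^bsub>B\<^esub> f \<zero>\<^bsub>A\<^esub>"
    using assms(3) unfolding rep_hom_def by blast
  moreover have "f \<zero>\<^bsub>A\<^esub> \<in> carrier B" using assms(3) unfolding rep_hom_def by blast
  ultimately show ?thesis by simp
qed

locale pbctx =
  fixes G :: "'g monoid" and R :: "'r ring" and L :: "('r,'l) module" and lam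
    and V :: "('r,'v) module" and vr and f and E :: "('r,'e) module" and sig and q
  assumes L: "is_rep G R L lam" and V: "is_rep G R V vr" and E: "is_rep G R E sig"
    and f: "rep_hom G R L lam V vr f" and q: "rep_hom G R E sig V vr q"

context pbctx begin

lemma modL: "module R L" using L rep_module by blast
lemma modE: "module R E" using E rep_module by blast
lemma modV: "module R V" using V rep_module by blast

lemma f_simps: "l \<in> carrier L \<Longrightarrow> l' \<in> carrier L \<Longrightarrow> f (l \<oplus>\<^bsub>L\<^esub> l') = f l \<oplus>\<^bsub>V\<^esub> f l'"
  "a \<in> carrier R \<Longrightarrow> l \<in> carrier L \<Longrightarrow> f (a \<odot>\<^bsub>L\<^esub> l) = a \<odot>\<^bsub>V\<^esub> f l"
  "g \<in> carrier G \<Longrightarrow> l \<in> carrier L \<Longrightarrow> f (lam g l) = vr g (f l)"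
  "f \<zero>\<^bsub>L\<^esub> = \<zero>\<^bsub>V\<^esub>"
  using f rep_hom_zero[OF modL modV f] unfolding rep_hom_def by auto

lemma q_simps: "e \<in> carrier E \<Longrightarrow> e' \<in> carrier E \<Longrightarrow> q (e \<oplus>\<^bsub>E\<^esub> e') = q e \<oplus>\<^bsub>V\<^esub> q e'"
  "a \<in> carrier R \<Longrightarrow> e \<in> carrier E \<Longrightarrow> q (a \<odot>\<^bsub>E\<^esub> e) = a \<odot>\<^bsub>V\<^esub> q e"
  "g \<in> carrier G \<Longrightarrow> e \<in> carrier E \<Longrightarrow> q (sig g e) = vr g (q e)"
  "q \<zero>\<^bsub>E\<^esub> = \<zero>\<^bsub>V\<^esub>"
  using q rep_hom_zero[OF modE modV q] unfolding rep_hom_def by auto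

lemma pb_module: "module R (pb L E f q)"
proof -
  interpret L: module R L by (rule modL)
  interpret E: module R E by (rule modE)
  interpret V: module R V by (rule modV)
  show ?thesis
  proof (rule moduleI)
    show "cring R" by (rule L.is_cring)
    show "abelian_group (pb L E f q)"
    proof (rule abelian_groupI)
      fix x assume x: "x \<in> carrier (pb L E f q)"
      let ?y = "((\<ominus>\<^bsub>R\<^esub> \<one>\<^bsub>R\<^esub>) \<odot>\<^bsub>L\<^esub> fst x, (\<ominus>\<^bsub>R\<^esub> \<one>\<^bsub>R\<^esub>) \<odot>\<^bsub>E\<^esub> snd x)"
      have "?y \<in> carrier (pb L E f q)" using x by (simp add: f_simps q_simps)
      moreover have "?y \<oplus>\<^bsub>pb L E f q\<^esub> x = \<zero>\<^bsub>pb L E f q\<^esub>"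
        using x by (simp add: L.smult_l_minus E.smult_l_minus L.l_neg E.l_neg)
      ultimately show "\<exists>y\<in>carrier (pb L E f q). y \<oplus>\<^bsub>pb L E f q\<^esub> x = \<zero>\<^bsub>pb L E f q\<^esub>" by blast
    qed (auto simp: f_simps q_simps L.a_ac E.a_ac)
  qed (auto simp: f_simps q_simps L.smult_l_distr E.smult_l_distr L.smult_r_distr E.smult_r_distr
      L.smult_assoc1 E.smult_assoc1)
qed

lemma pb_rep: "is_rep G R (pb L E f q) (pbrho lam sig)"
  unfolding is_rep_def pbrho_def
  using L E pb_module f_simps q_simps unfolding is_rep_def by auto

lemma snd_hom: "rep_hom G R (pb L E f q) (pbrho lam sig) E sig snd"
  unfolding rep_hom_def pbrho_def by auto

lemma snd_surj: assumes "f ` carrier L = carrier V" "q ` carrier E \<subseteq> carrier V"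
  shows "snd ` carrier (pb L E f q) = carrier E"
proof
  show "snd ` carrier (pb L E f q) \<subseteq> carrier E" by auto
  show "carrier E \<subseteq> snd ` carrier (pb L E f q)"
  proof
    fix e assume e: "e \<in> carrier E"
    then obtain l where l: "l \<in> carrier L" "f l = q e" using assms by (metis image_iff subsetD)
    hence "(l, e) \<in> carrier (pb L E f q)" using e by simp
    thus "e \<in> snd ` carrier (pb L E f q)" by (metis image_eqI snd_conv)
  qed
qed

end

context pbctx begin

lemma pb_fin_gen:
  assumes ffL: "fin_free R L" and fgE: "fin_gen R E" and p: "p \<in> carrier R"
    and fsurj: "f ` carrier L \<subseteq> q ` carrier E"
    and kern: "\<And>x y. x \<in> carrier E \<Longrightarrow> y \<in> carrier E \<Longrightarrow> q x = q y \<Longrightarrow>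
                  \<exists>e'\<in>carrier E. x \<ominus>\<^bsub>E\<^esub> y = p \<odot>\<^bsub>E\<^esub> e'"
    and qp: "\<And>x. x \<in> carrier E \<Longrightarrow> q (p \<odot>\<^bsub>E\<^esub> x) = \<zero>\<^bsub>V\<^esub>"
  shows "fin_gen R (pb L E f q)"
proof -
  interpret L: module R L by (rule modL)
  interpret E: module R E by (rule modE)
  interpret P: module R "pb L E f q" by (rule pb_module)
  obtain B where B: "finite B" "B \<subseteq> carrier L"
    and uq: "\<forall>x\<in>carrier L. \<exists>!c. c \<in> B \<rightarrow>\<^sub>E carrier R \<and> x = (\<Oplus>\<^bsub>L\<^esub>b\<in>B. c b \<odot>\<^bsub>L\<^esub> b)"
    using ffL unfolding fin_free_def by blast
  have Bg: "carrier L \<subseteq> lcs R L B"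
  proof
    fix x assume "x \<in> carrier L"
    then obtain c where "c \<in> B \<rightarrow>\<^sub>E carrier R" "x = (\<Oplus>\<^bsub>L\<^esub>b\<in>B. c b \<odot>\<^bsub>L\<^esub> b)" using uq by blast
    thus "x \<in> lcs R L B" unfolding lcs_def by (auto simp: PiE_iff Pi_iff)
  qed
  obtain S where S: "finite S" "S \<subseteq> carrier E" "carrier E \<subseteq> lcs R E S"
    using fin_gen_lcs[THEN iffD1, OF fgE] by blast
  define eb where "eb b = (SOME e. e \<in> carrier E \<and> q e = f b)" for b
  have eb: "eb b \<in> carrier E \<and> q (eb b) = f b" if "b \<in> B" for b
  proof -
    have "f b \<in> q ` carrier E" using fsurj B that by auto
    hence "\<exists>e. e \<in> carrier E \<and> q e = f b" by auto
    thus ?thesis unfolding eb_def by (rule someI_ex)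
  qed
  define Gs where "Gs = (\<lambda>b. (b, eb b)) ` B \<union> (\<lambda>s. (\<zero>\<^bsub>L\<^esub>, p \<odot>\<^bsub>E\<^esub> s)) ` S"
  have Gf: "finite Gs" unfolding Gs_def using B S by auto
  have Gc: "Gs \<subseteq> carrier (pb L E f q)"
    unfolding Gs_def using B S eb qp p by (auto simp: f_simps)
  let ?T = "lcs R (pb L E f q) Gs"
  have Tc: "?T \<subseteq> carrier (pb L E f q)" using P.lcs_carr[OF Gf Gc] .
  have T0: "\<zero>\<^bsub>pb L E f q\<^esub> \<in> ?T" using P.lcs_zero[OF Gf Gc] .
  have Tadd: "\<And>x y. x \<in> ?T \<Longrightarrow> y \<in> ?T \<Longrightarrow> x \<oplus>\<^bsub>pb L E f q\<^esub> y \<in> ?T" using P.lcs_add[OF Gf Gc] by blast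
  have Tsm: "\<And>a x. a \<in> carrier R \<Longrightarrow> x \<in> ?T \<Longrightarrow> a \<odot>\<^bsub>pb L E f q\<^esub> x \<in> ?T" using P.lcs_smult[OF Gf Gc] by blast
  have Tg: "\<And>x. x \<in> Gs \<Longrightarrow> x \<in> ?T" using P.lcs_gen[OF Gf Gc] by blast
  define T1 where "T1 = {e' \<in> carrier E. (\<zero>\<^bsub>L\<^esub>, p \<odot>\<^bsub>E\<^esub> e') \<in> ?T}"
  have "lcs R E S \<subseteq> T1"
  proof (rule E.lcs_min[OF S(1)])
    show "S \<subseteq> T1" unfolding T1_def using S Tg unfolding Gs_def by auto
    show "T1 \<subseteq> carrier E" unfolding T1_def by auto
    show "\<zero>\<^bsub>E\<^esub> \<in> T1" unfolding T1_def using T0 p by simp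
    fix x y assume "x \<in> T1" "y \<in> T1"
    hence xy: "x \<in> carrier E" "y \<in> carrier E" unfolding T1_def by auto
    have "(\<zero>\<^bsub>L\<^esub>, p \<odot>\<^bsub>E\<^esub> x) \<oplus>\<^bsub>pb L E f q\<^esub> (\<zero>\<^bsub>L\<^esub>, p \<odot>\<^bsub>E\<^esub> y) \<in> ?T"
      using Tadd \<open>x \<in> T1\<close> \<open>y \<in> T1\<close> unfolding T1_def by blast
    moreover have "(\<zero>\<^bsub>L\<^esub>, p \<odot>\<^bsub>E\<^esub> x) \<oplus>\<^bsub>pb L E f q\<^esub> (\<zero>\<^bsub>L\<^esub>, p \<odot>\<^bsub>E\<^esub> y) = (\<zero>\<^bsub>L\<^esub>, p \<odot>\<^bsub>E\<^esub> (x \<oplus>\<^bsub>E\<^esub> y))"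
      using p xy by (simp add: E.smult_r_distr)
    ultimately show "x \<oplus>\<^bsub>E\<^esub> y \<in> T1" unfolding T1_def using xy by simp
  next
    fix a x assume a: "a \<in> carrier R" and "x \<in> T1"
    hence xc: "x \<in> carrier E" unfolding T1_def by auto
    have "a \<odot>\<^bsub>pb L E f q\<^esub> (\<zero>\<^bsub>L\<^esub>, p \<odot>\<^bsub>E\<^esub> x) \<in> ?T"
      using Tsm a \<open>x \<in> T1\<close> unfolding T1_def by blast
    moreover have "a \<odot>\<^bsub>E\<^esub> (p \<odot>\<^bsub>E\<^esub> x) = p \<odot>\<^bsub>E\<^esub> (a \<odot>\<^bsub>E\<^esub> x)"
      using a p xc by (simp add: E.smult_assoc1[symmetric] L.R.m_comm)
    moreover have "a \<odot>\<^bsub>pb L E f q\<^esub> (\<zero>\<^bsub>L\<^esub>, p \<odot>\<^bsub>E\<^esub> x) = (\<zero>\<^bsub>L\<^esub>, a \<odot>\<^bsub>E\<^esub> (p \<odot>\<^bsub>E\<^esub> x))"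
      using a by simp
    ultimately show "a \<odot>\<^bsub>E\<^esub> x \<in> T1" unfolding T1_def using a xc by simp
  qed
  hence T1E: "carrier E \<subseteq> T1" using S(3) by blast
  define T2 where "T2 = {l \<in> carrier L. \<exists>e. (l, e) \<in> ?T}"
  have "lcs R L B \<subseteq> T2"
  proof (rule L.lcs_min[OF B(1)])
    show "B \<subseteq> T2"
    proof
      fix b assume b: "b \<in> B"
      hence "(b, eb b) \<in> Gs" unfolding Gs_def by auto
      thus "b \<in> T2" unfolding T2_def using Tg b B by auto
    qed
    show "T2 \<subseteq> carrier L" unfolding T2_def by auto
    show "\<zero>\<^bsub>L\<^esub> \<in> T2" unfolding T2_def using T0 by auto
    fix x y assume "x \<in> T2" "y \<in> T2"
    then obtain ex ey where "(x, ex) \<in> ?T" "(y, ey) \<in> ?T" "x \<in> carrier L" "y \<in> carrier L"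
      unfolding T2_def by auto
    hence "(x, ex) \<oplus>\<^bsub>pb L E f q\<^esub> (y, ey) \<in> ?T" using Tadd by blast
    thus "x \<oplus>\<^bsub>L\<^esub> y \<in> T2" unfolding T2_def using \<open>x \<in> carrier L\<close> \<open>y \<in> carrier L\<close> by auto
  next
    fix a x assume a: "a \<in> carrier R" and "x \<in> T2"
    then obtain ex where "(x, ex) \<in> ?T" "x \<in> carrier L" unfolding T2_def by auto
    hence "a \<odot>\<^bsub>pb L E f q\<^esub> (x, ex) \<in> ?T" using Tsm a by blast
    thus "a \<odot>\<^bsub>L\<^esub> x \<in> T2" unfolding T2_def using a \<open>x \<in> carrier L\<close> by auto
  qed
  hence T2L: "carrier L \<subseteq> T2" using Bg by blast
  have "carrier (pb L E f q) \<subseteq> ?T"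
  proof
    fix x assume x: "x \<in> carrier (pb L E f q)"
    obtain l e where le: "x = (l, e)" by (cases x)
    have l: "l \<in> carrier L" and e: "e \<in> carrier E" and fl: "f l = q e" using x le by auto
    obtain e0 where e0: "(l, e0) \<in> ?T" using T2L l unfolding T2_def by blast
    hence e0c: "e0 \<in> carrier E" "f l = q e0" using Tc by auto
    obtain e' where e': "e' \<in> carrier E" "e \<ominus>\<^bsub>E\<^esub> e0 = p \<odot>\<^bsub>E\<^esub> e'"
      using kern[OF e e0c(1)] fl e0c by auto
    have "(\<zero>\<^bsub>L\<^esub>, p \<odot>\<^bsub>E\<^esub> e') \<in> ?T" using T1E e' unfolding T1_def by auto
    hence "(l, e0) \<oplus>\<^bsub>pb L E f q\<^esub> (\<zero>\<^bsub>L\<^esub>, p \<odot>\<^bsub>E\<^esub> e') \<in> ?T" using Tadd e0 by blast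
    moreover have "e0 \<oplus>\<^bsub>E\<^esub> (e \<ominus>\<^bsub>E\<^esub> e0) = e"
      using E.a_lcomm[of e0 e "\<ominus>\<^bsub>E\<^esub> e0"] E.r_neg[of e0] e e0c by (simp add: a_minus_def)
    ultimately show "x \<in> ?T" using le l e' by simp
  qed
  thus ?thesis using Gf Gc by (intro fin_gen_lcs[THEN iffD2] exI[of _ Gs] conjI)
qed

lemma pb_tb:
  assumes dv: "dvr R p" and ffL: "fin_free R L" and tbE: "tb R E p (Suc n)"
    and kern: "\<And>x y. x \<in> carrier E \<Longrightarrow> y \<in> carrier E \<Longrightarrow> q x = q y \<Longrightarrow>
                  \<exists>e'\<in>carrier E. x \<ominus>\<^bsub>E\<^esub> y = p \<odot>\<^bsub>E\<^esub> e'"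
  shows "tb R (pb L E f q) p n"
  unfolding tb_def
proof (intro ballI impI)
  interpret D: dvr R p by fact
  interpret L: module R L by (rule modL)
  interpret E: module R E by (rule modE)
  fix x assume x: "x \<in> carrier (pb L E f q)"
  obtain l e where le: "x = (l, e)" by (cases x)
  have l: "l \<in> carrier L" and e: "e \<in> carrier E" and fl: "f l = q e" using x le by auto
  assume "\<exists>k::nat. (p [^]\<^bsub>R\<^esub> k) \<odot>\<^bsub>pb L E f q\<^esub> x = \<zero>\<^bsub>pb L E f q\<^esub>"
  then obtain k :: nat where k: "(p [^]\<^bsub>R\<^esub> k) \<odot>\<^bsub>L\<^esub> l = \<zero>\<^bsub>L\<^esub>" "(p [^]\<^bsub>R\<^esub> k) \<odot>\<^bsub>E\<^esub> e = \<zero>\<^bsub>E\<^esub>"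
    using le by auto
  have l0: "l = \<zero>\<^bsub>L\<^esub>"
    using free_tf[OF modL D.domain_axioms ffL D.pow_carr D.pow_nz l k(1)] .
  have "q e = q \<zero>\<^bsub>E\<^esub>" using fl l0 f_simps(4) q_simps(4) by simp
  then obtain e' where e': "e' \<in> carrier E" "e \<ominus>\<^bsub>E\<^esub> \<zero>\<^bsub>E\<^esub> = p \<odot>\<^bsub>E\<^esub> e'"
    using kern[OF e E.zero_closed] by blast
  have ee: "e = p \<odot>\<^bsub>E\<^esub> e'" using e'(2) e E.minus_eq0_iff
    by (simp add: a_minus_def) (metis E.l_neg E.r_zero E.zero_closed e'(2) E.add.inv_closed E.r_neg
        a_minus_def E.minus_eq0_iff)
  have "(p [^]\<^bsub>R\<^esub> Suc k) \<odot>\<^bsub>E\<^esub> e' = (p [^]\<^bsub>R\<^esub> k) \<odot>\<^bsub>E\<^esub> e"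
    unfolding ee using e' D.p_carr by (simp add: E.smult_assoc1)
  hence "(p [^]\<^bsub>R\<^esub> Suc n) \<odot>\<^bsub>E\<^esub> e' = \<zero>\<^bsub>E\<^esub>" using tbE e' k(2) unfolding tb_def by metis
  hence "(p [^]\<^bsub>R\<^esub> n) \<odot>\<^bsub>E\<^esub> e = \<zero>\<^bsub>E\<^esub>"
    unfolding ee using e' D.p_carr by (simp add: E.smult_assoc1)
  thus "(p [^]\<^bsub>R\<^esub> n) \<odot>\<^bsub>pb L E f q\<^esub> x = \<zero>\<^bsub>pb L E f q\<^esub>" using le l0 by simp
qed

end

context dvrmod begin

lemma torsion_bound_lcs:
  assumes "finite S" "S \<subseteq> carrier M"
  shows "\<exists>N::nat. \<forall>x\<in>lcs R M S. (\<exists>k::nat. (p [^] k) \<odot>\<^bsub>M\<^esub> x = \<zero>\<^bsub>M\<^esub>) \<longrightarrow> (p [^] N) \<odot>\<^bsub>M\<^esub> x = \<zero>\<^bsub>M\<^esub>"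
  using assms
proof (induction S rule: finite_induct)
  case empty
  have z: "x = \<zero>\<^bsub>M\<^esub>" if H: "x \<in> lcs R M {}" for x
  proof -
    obtain c where "x = (\<Oplus>\<^bsub>M\<^esub>t\<in>{}. c t \<odot>\<^bsub>M\<^esub> t)" using H unfolding lcs_def by blast
    thus ?thesis by (simp only: M.finsum_empty)
  qed
  show ?case
  proof (intro exI[of _ 0] ballI impI)
    fix x assume "x \<in> lcs R M {}"
    hence "x = \<zero>\<^bsub>M\<^esub>" by (rule z)
    thus "(p [^] (0::nat)) \<odot>\<^bsub>M\<^esub> x = \<zero>\<^bsub>M\<^esub>" by simp
  qed
next
  case (insert s S)
  have Sf: "finite S" and Ss: "S \<subseteq> carrier M" and sc: "s \<in> carrier M" using insert by auto
  obtain N :: nat where N: "\<forall>x\<in>lcs R M S. (\<exists>k::nat. (p [^] k) \<odot>\<^bsub>M\<^esub> x = \<zero>\<^bsub>M\<^esub>) \<longrightarrow> (p [^] N) \<odot>\<^bsub>M\<^esub> x = \<zero>\<^bsub>M\<^esub>"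
    using insert by blast
  have decomp: "\<exists>r y. r \<in> carrier R \<and> y \<in> lcs R M S \<and> x = r \<odot>\<^bsub>M\<^esub> s \<oplus>\<^bsub>M\<^esub> y"
    if x: "x \<in> lcs R M (insert s S)" for x
  proof -
    obtain c where c: "c \<in> insert s S \<rightarrow> carrier R" "x = (\<Oplus>\<^bsub>M\<^esub>t\<in>insert s S. c t \<odot>\<^bsub>M\<^esub> t)"
      using x unfolding lcs_def by blast
    have "x = c s \<odot>\<^bsub>M\<^esub> s \<oplus>\<^bsub>M\<^esub> (\<Oplus>\<^bsub>M\<^esub>t\<in>S. c t \<odot>\<^bsub>M\<^esub> t)"
      unfolding c(2) using c Ss sc insert(2) Sf by (intro M.finsum_insert) (auto simp: Pi_iff subsetD)
    moreover have "(\<Oplus>\<^bsub>M\<^esub>t\<in>S. c t \<odot>\<^bsub>M\<^esub> t) \<in> lcs R M S" unfolding lcs_def using c by auto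
    ultimately show ?thesis using c by auto
  qed
  have lSc: "lcs R M S \<subseteq> carrier M" using lcs_carr[OF Sf Ss] .
  show ?case
  proof (cases "\<exists>j::nat. (p [^] j) \<odot>\<^bsub>M\<^esub> s \<in> lcs R M S")
    case True
    then obtain j :: nat where j: "(p [^] j) \<odot>\<^bsub>M\<^esub> s \<in> lcs R M S" by blast
    show ?thesis
    proof (intro exI[of _ "N + j"] ballI impI)
      fix x assume x: "x \<in> lcs R M (insert s S)"
      then obtain r y where ry: "r \<in> carrier R" "y \<in> lcs R M S" "x = r \<odot>\<^bsub>M\<^esub> s \<oplus>\<^bsub>M\<^esub> y"
        using decomp by blast
      have yc: "y \<in> carrier M" using ry lSc by blast
      have xc: "x \<in> carrier M" using ry yc sc by simp
      assume "\<exists>k::nat. (p [^] k) \<odot>\<^bsub>M\<^esub> x = \<zero>\<^bsub>M\<^esub>"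
      then obtain k :: nat where k: "(p [^] k) \<odot>\<^bsub>M\<^esub> x = \<zero>\<^bsub>M\<^esub>" by blast
      have "(p [^] j) \<odot>\<^bsub>M\<^esub> x = r \<odot>\<^bsub>M\<^esub> ((p [^] j) \<odot>\<^bsub>M\<^esub> s) \<oplus>\<^bsub>M\<^esub> (p [^] j) \<odot>\<^bsub>M\<^esub> y"
        unfolding ry(3) using ry sc yc
        by (simp add: smult_r_distr smult_assoc1[symmetric] m_comm)
      also have "\<dots> \<in> lcs R M S"
        using lcs_add[OF Sf Ss lcs_smult[OF Sf Ss j ry(1)] lcs_smult[OF Sf Ss ry(2)]] by simp
      finally have pj: "(p [^] j) \<odot>\<^bsub>M\<^esub> x \<in> lcs R M S" .
      have "(p [^] k) \<odot>\<^bsub>M\<^esub> ((p [^] j) \<odot>\<^bsub>M\<^esub> x) = (p [^] j) \<odot>\<^bsub>M\<^esub> ((p [^] k) \<odot>\<^bsub>M\<^esub> x)"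
        using xc by (simp add: smult_assoc1[symmetric] m_comm)
      also have "\<dots> = \<zero>\<^bsub>M\<^esub>" using k by simp
      finally have "(p [^] N) \<odot>\<^bsub>M\<^esub> ((p [^] j) \<odot>\<^bsub>M\<^esub> x) = \<zero>\<^bsub>M\<^esub>" using N pj by blast
      moreover have "(p [^] N) \<odot>\<^bsub>M\<^esub> ((p [^] j) \<odot>\<^bsub>M\<^esub> x) = (p [^] (N + j)) \<odot>\<^bsub>M\<^esub> x"
        using xc p_carr by (simp add: smult_assoc1[symmetric] nat_pow_mult)
      ultimately show "(p [^] (N + j)) \<odot>\<^bsub>M\<^esub> x = \<zero>\<^bsub>M\<^esub>" by simp
    qed
  next
    case False
    show ?thesis
    proof (intro exI[of _ N] ballI impI)
      fix x assume x: "x \<in> lcs R M (insert s S)"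
      then obtain r y where ry: "r \<in> carrier R" "y \<in> lcs R M S" "x = r \<odot>\<^bsub>M\<^esub> s \<oplus>\<^bsub>M\<^esub> y"
        using decomp by blast
      have yc: "y \<in> carrier M" using ry lSc by blast
      have xc: "x \<in> carrier M" using ry yc sc by simp
      assume "\<exists>k::nat. (p [^] k) \<odot>\<^bsub>M\<^esub> x = \<zero>\<^bsub>M\<^esub>"
      then obtain k :: nat where k: "(p [^] k) \<odot>\<^bsub>M\<^esub> x = \<zero>\<^bsub>M\<^esub>" by blast
      have tor: "\<exists>k::nat. (p [^] k) \<odot>\<^bsub>M\<^esub> x = \<zero>\<^bsub>M\<^esub>" using k by blast
      have "(p [^] k \<otimes> r) \<odot>\<^bsub>M\<^esub> s \<oplus>\<^bsub>M\<^esub> (p [^] k) \<odot>\<^bsub>M\<^esub> y = \<zero>\<^bsub>M\<^esub>"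
        using k unfolding ry(3) using ry sc yc by (simp add: smult_r_distr smult_assoc1)
      hence "\<ominus>\<^bsub>M\<^esub> ((p [^] k) \<odot>\<^bsub>M\<^esub> y) = (p [^] k \<otimes> r) \<odot>\<^bsub>M\<^esub> s"
        using M.minus_equality ry sc yc by simp
      moreover have "\<ominus>\<^bsub>M\<^esub> ((p [^] k) \<odot>\<^bsub>M\<^esub> y) \<in> lcs R M S"
        using lcs_neg[OF Sf Ss lcs_smult[OF Sf Ss ry(2)]] by simp
      ultimately have rs: "(p [^] k \<otimes> r) \<odot>\<^bsub>M\<^esub> s \<in> lcs R M S" by simp
      have "p [^] k \<otimes> r = \<zero>"
      proof (rule ccontr)
        assume nz: "p [^] k \<otimes> r \<noteq> \<zero>"
        then obtain u i where ui: "u \<in> Units R" "p [^] k \<otimes> r = u \<otimes> p [^] (i::nat)"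
          using val_decomp ry by (metis m_closed pow_carr)
        have uc: "u \<in> carrier R" "inv u \<in> carrier R" using ui by auto
        have "inv u \<odot>\<^bsub>M\<^esub> ((p [^] k \<otimes> r) \<odot>\<^bsub>M\<^esub> s) = (inv u \<otimes> u \<otimes> p [^] i) \<odot>\<^bsub>M\<^esub> s"
          unfolding ui(2) using uc sc by (simp add: smult_assoc1 m_assoc)
        also have "\<dots> = (p [^] i) \<odot>\<^bsub>M\<^esub> s" using ui by simp
        finally have "(p [^] i) \<odot>\<^bsub>M\<^esub> s \<in> lcs R M S"
          using lcs_smult[OF Sf Ss rs uc(2)] by simp
        thus False using False by blast
      qed
      hence "r = \<zero>" using integral[of "p [^] k" r] pow_nz ry by auto
      hence "x = y" using ry yc sc by simp
      thus "(p [^] N) \<odot>\<^bsub>M\<^esub> x = \<zero>\<^bsub>M\<^esub>" using N ry(2) tor by blast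
    qed
  qed
qed

lemma torsion_bound:
  assumes "fin_gen R M" shows "\<exists>n. tb R M p n"
proof -
  obtain S where S: "finite S" "S \<subseteq> carrier M" "carrier M \<subseteq> lcs R M S"
    using fin_gen_lcs[THEN iffD1, OF assms] by blast
  obtain N :: nat where "\<forall>x\<in>lcs R M S. (\<exists>k::nat. (p [^] k) \<odot>\<^bsub>M\<^esub> x = \<zero>\<^bsub>M\<^esub>) \<longrightarrow> (p [^] N) \<odot>\<^bsub>M\<^esub> x = \<zero>\<^bsub>M\<^esub>"
    using torsion_bound_lcs[OF S(1,2)] by blast
  hence N': "\<And>x. x \<in> lcs R M S \<Longrightarrow> (\<exists>k::nat. (p [^] k) \<odot>\<^bsub>M\<^esub> x = \<zero>\<^bsub>M\<^esub>) \<Longrightarrow> (p [^] N) \<odot>\<^bsub>M\<^esub> x = \<zero>\<^bsub>M\<^esub>"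
    by blast
  have "tb R M p N" unfolding tb_def
  proof (intro ballI impI)
    fix x assume x: "x \<in> carrier M" and t: "\<exists>k::nat. (p [^] k) \<odot>\<^bsub>M\<^esub> x = \<zero>\<^bsub>M\<^esub>"
    have "x \<in> lcs R M S" using S(3) x by (rule subsetD)
    thus "(p [^] N) \<odot>\<^bsub>M\<^esub> x = \<zero>\<^bsub>M\<^esub>" using N' t by blast
  qed
  thus ?thesis by blast
qed

end

lemma step_lift:
  fixes R :: "'r ring" and E :: "('r,'e) module" and G :: "'g monoid"
  assumes dv: "dvr R p"
    and hyp: "\<forall>(V :: ('r, (nat \<Rightarrow> 'r) set) module) rho.
           in_Rep G R V rho \<and> (\<forall>x\<in>carrier V. p \<odot>\<^bsub>V\<^esub> x = \<zero>\<^bsub>V\<^esub>)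
           \<longrightarrow> has_weak_lift G R V rho"
    and IH: "\<And>(P :: ('r, (nat \<Rightarrow> 'r) set) module) pr. in_Rep G R P pr \<Longrightarrow> tb R P p n \<Longrightarrow> has_weak_lift G R P pr"
    and E: "in_Rep G R E sig" and tbE: "tb R E p (Suc n)"
  shows "has_weak_lift G R E sig"
proof -
  interpret D: dvr R p by fact
  have repE: "is_rep G R E sig" and fgE: "fin_gen R E" using E unfolding in_Rep_def by blast+
  obtain q :: "'e \<Rightarrow> (nat \<Rightarrow> 'r) set" where
    Q: "pushctx G R E sig ((\<lambda>x. p \<odot>\<^bsub>E\<^esub> x) ` carrier E) q"
    using exists_quot[OF E D.p_carr] by blast
  interpret Q: pushctx G R E sig "(\<lambda>x. p \<odot>\<^bsub>E\<^esub> x) ` carrier E" q by fact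
  let ?V = "push E q" and ?vr = "pushrho E q sig"
  have VR: "in_Rep G R ?V ?vr" using Q.push_in_Rep[OF E] .
  have qp: "\<And>x. x \<in> carrier E \<Longrightarrow> q (p \<odot>\<^bsub>E\<^esub> x) = \<zero>\<^bsub>?V\<^esub>"
    using Q.q_zero_iff D.p_carr by auto
  have kill: "\<forall>u\<in>carrier ?V. p \<odot>\<^bsub>?V\<^esub> u = \<zero>\<^bsub>?V\<^esub>"
  proof
    fix u assume "u \<in> carrier ?V"
    then obtain x where x: "x \<in> carrier E" "u = q x" by auto
    thus "p \<odot>\<^bsub>?V\<^esub> u = \<zero>\<^bsub>?V\<^esub>" using Q.hom_smult[OF D.p_carr x(1)] qp[OF x(1)] by simp
  qed
  have "has_weak_lift G R ?V ?vr" using hyp VR kill by blast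
  then obtain L :: "('r, nat \<Rightarrow> 'r) module" and lam f where
    lift: "is_weak_lift G R ?V ?vr L lam f" unfolding has_weak_lift_def by blast
  have LR: "in_Rep_free G R L lam" and fh: "rep_hom G R L lam ?V ?vr f" and fs: "f ` carrier L = carrier ?V"
    using lift unfolding is_weak_lift_def by blast+
  have repL: "is_rep G R L lam" and ffL: "fin_free R L" using LR unfolding in_Rep_free_def by blast+
  interpret PB: pbctx G R L lam ?V ?vr f E sig q
    unfolding pbctx_def using repL Q.push_rep repE fh Q.q_hom by blast
  have kern: "\<And>x y. x \<in> carrier E \<Longrightarrow> y \<in> carrier E \<Longrightarrow> q x = q y \<Longrightarrow>
                  \<exists>e'\<in>carrier E. x \<ominus>\<^bsub>E\<^esub> y = p \<odot>\<^bsub>E\<^esub> e'"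
    using Q.q_eq by blast
  let ?P = "pb L E f q" and ?pr = "pbrho lam sig"
  have fsub: "f ` carrier L \<subseteq> q ` carrier E" using fs by simp
  have PR: "in_Rep G R ?P ?pr"
    unfolding in_Rep_def using PB.pb_rep PB.pb_fin_gen[OF ffL fgE D.p_carr fsub kern qp] by blast
  have tbP: "tb R ?P p n" using PB.pb_tb[OF dv ffL tbE kern] .
  obtain q' :: "((nat \<Rightarrow> 'r) \<times> 'e) \<Rightarrow> (nat \<Rightarrow> 'r) set" where Q': "injctx G R ?P ?pr q'"
    using exists_injctx[OF PR] by blast
  interpret Q': injctx G R ?P ?pr q' by fact
  have "has_weak_lift G R (push ?P q') (pushrho ?P q' ?pr)"
    using IH[OF Q'.push_in_Rep[OF PR] Q'.tb_push[OF tbP D.p_carr]] .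
  hence "has_weak_lift G R ?P ?pr" using Q'.lift_back by blast
  moreover have "snd ` carrier ?P = carrier E" using PB.snd_surj fs by auto
  ultimately show ?thesis using has_lift_comp PB.snd_hom by blast
qed

lemma main_U:
  fixes R :: "'r ring" and G :: "'g monoid"
  assumes dv: "dvr R p"
    and hyp: "\<forall>(V :: ('r, (nat \<Rightarrow> 'r) set) module) rho.
           in_Rep G R V rho \<and> (\<forall>x\<in>carrier V. p \<odot>\<^bsub>V\<^esub> x = \<zero>\<^bsub>V\<^esub>)
           \<longrightarrow> has_weak_lift G R V rho"
  shows "\<And>(E :: ('r, (nat \<Rightarrow> 'r) set) module) sig. in_Rep G R E sig \<Longrightarrow> tb R E p n \<Longrightarrow> has_weak_lift G R E sig"
proof (induction n)
  case 0
  interpret D: dvr R p by fact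
  have rep: "is_rep G R E sig" using 0 unfolding in_Rep_def by blast
  interpret module R E using rep_module[OF rep] .
  show ?case
  proof (rule base_lift[OF dv 0(1)])
    fix x assume x: "x \<in> carrier E" "p \<odot>\<^bsub>E\<^esub> x = \<zero>\<^bsub>E\<^esub>"
    hence "(p [^]\<^bsub>R\<^esub> (1::nat)) \<odot>\<^bsub>E\<^esub> x = \<zero>\<^bsub>E\<^esub>" using D.p_carr by simp
    hence "(p [^]\<^bsub>R\<^esub> (0::nat)) \<odot>\<^bsub>E\<^esub> x = \<zero>\<^bsub>E\<^esub>" using 0(2) x unfolding tb_def by blast
    thus "x = \<zero>\<^bsub>E\<^esub>" using x by simp
  qed
next
  case (Suc n)
  show ?case using step_lift[OF dv hyp Suc.IH Suc.prems] by blast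
qed

theorem proposition4p4:
  fixes R :: "'r ring" and p :: 'r and G :: "'g monoid"
  assumes "dvr_uniformizer R p"
    and "group G"
    and "\<forall>(V :: ('r, (nat \<Rightarrow> 'r) set) module) rho.
           in_Rep G R V rho \<and> (\<forall>x\<in>carrier V. p \<odot>\<^bsub>V\<^esub> x = \<zero>\<^bsub>V\<^esub>)
           \<longrightarrow> has_weak_lift G R V rho"
  shows "\<forall>(E :: ('r, 'e) module) sigma. in_Rep G R E sigma \<longrightarrow> has_weak_lift G R E sigma"
proof (intro allI impI)
  fix E :: "('r, 'e) module" and sigma
  assume E: "in_Rep G R E sigma"
  have dv: "dvr R p" using dvr_from_def[OF assms(1)] .
  have rep: "is_rep G R E sigma" and fg: "fin_gen R E" using E unfolding in_Rep_def by blast+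
  interpret DM: dvrmod R p E unfolding dvrmod_def using dv rep_module[OF rep] by blast
  obtain n where tbn: "tb R E p n" using DM.torsion_bound[OF fg] by blast
  obtain q :: "'e \<Rightarrow> (nat \<Rightarrow> 'r) set" where Q: "injctx G R E sigma q"
    using exists_injctx[OF E] by blast
  interpret Q: injctx G R E sigma q by fact
  have "has_weak_lift G R (push E q) (pushrho E q sigma)"
    using main_U[OF dv assms(3) Q.push_in_Rep[OF E] Q.tb_push[OF tbn DM.p_carr]] .
  thus "has_weak_lift G R E sigma" using Q.lift_back by blast
qed

end
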